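(* (1) The Holevo–Werner channel $W_5^-$ has an exact factorization through $M_5(\mathbb{C})\otimes M_4(\mathbb{C})$, i.e. there is a unitary $u\in M_5(\mathbb{C})\otimes M_4(\mathbb{C})$ with $W_5^-(x)=(\mathrm{id}_5\otimes\tau_4)(u^*(x\otimes 1_4)u)$ for all $x\in M_5(\mathbb{C})$. (2) For every odd integer $n\geq 5$, $W_n^-$ is factorizable of degree $4$, i.e. $W_n^-\otimes S_4\in\mathrm{conv}(\mathrm{Aut}(M_n(\mathbb{C})\otimes M_4(\mathbb{C})))$.
   Context: For $n\geq 2$, the Holevo–Werner channel $W_n^-:M_n(\mathbb{C})\to M_n(\mathbb{C})$ is $W_n^-(x)=\frac{1}{n-1}(\mathrm{Tr}_n(x)1_n-x^t)$, where $\mathrm{Tr}_n$ is the (non-normalized) trace and $x^t$ the transpose. $\tau_k$ is the normalized trace on $M_k(\mathbb{C})$ and $S_k(y)=\tau_k(y)1_k$ is the completely depolarizing channel on $M_k(\mathbb{C})$. $\mathrm{Aut}(M_m(\mathbb{C}))$ is the set of maps $x\mapsto u^*xu$ with $u$ unitary, $\mathrm{conv}$ denotes convex hull, and $M_n(\mathbb{C})\otimes M_4(\mathbb{C})$ is identified with $M_{4n}(\mathbb{C})$. *)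

theory Defs
  imports "Jordan_Normal_Form.Matrix"
begin

text \<open>Complex n x n matrices are modelled as JNF matrices in carrier_mat n n.
  M_n tensor M_k is identified with M_(n*k) via the index (i,a) |-> i*k + a
  (Kronecker product convention).\<close>

definition adj :: "complex mat \<Rightarrow> complex mat" where
  "adj A = mat (dim_col A) (dim_row A) (\<lambda>(i,j). cnj (A $$ (j,i)))"

definition unitary :: "nat \<Rightarrow> complex mat \<Rightarrow> bool" where
  "unitary n U \<longleftrightarrow> U \<in> carrier_mat n n \<and> adj U * U = 1\<^sub>m n \<and> U * adj U = 1\<^sub>m n"

definition tr :: "complex mat \<Rightarrow> complex" where
  "tr A = (\<Sum>i<dim_row A. A $$ (i,i))"

definition kron :: "nat \<Rightarrow> nat \<Rightarrow> complex mat \<Rightarrow> complex mat \<Rightarrow> complex mat" where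
  "kron n k A B = mat (n*k) (n*k)
     (\<lambda>(p,q). A $$ (p div k, q div k) * B $$ (p mod k, q mod k))"

definition unit_mat :: "nat \<Rightarrow> nat \<Rightarrow> nat \<Rightarrow> complex mat" where
  "unit_mat n i j = mat n n (\<lambda>(p,q). if p = i \<and> q = j then 1 else 0)"

definition holevo_werner :: "nat \<Rightarrow> complex mat \<Rightarrow> complex mat" where
  "holevo_werner n x = (1 / (of_nat n - 1)) \<cdot>\<^sub>m (tr x \<cdot>\<^sub>m 1\<^sub>m n - transpose_mat x)"

definition ntr :: "nat \<Rightarrow> complex mat \<Rightarrow> complex" where
  "ntr k y = tr y / of_nat k"

definition depol :: "nat \<Rightarrow> complex mat \<Rightarrow> complex mat" where
  "depol k y = ntr k y \<cdot>\<^sub>m 1\<^sub>m k"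

definition id_tensor_ntr :: "nat \<Rightarrow> nat \<Rightarrow> complex mat \<Rightarrow> complex mat" where
  "id_tensor_ntr n k Y = mat n n
     (\<lambda>(i,j). (\<Sum>a<k. Y $$ (i*k + a, j*k + a)) / of_nat k)"

definition tensor_map :: "nat \<Rightarrow> nat \<Rightarrow> (complex mat \<Rightarrow> complex mat)
     \<Rightarrow> (complex mat \<Rightarrow> complex mat) \<Rightarrow> complex mat \<Rightarrow> complex mat" where
  "tensor_map n k \<Phi> \<Psi> Z = mat (n*k) (n*k) (\<lambda>(p,q).
     \<Sum>i<n. \<Sum>j<n. \<Sum>a<k. \<Sum>b<k.
       Z $$ (i*k + a, j*k + b) * \<Phi> (unit_mat n i j) $$ (p div k, q div k)
         * \<Psi> (unit_mat k a b) $$ (p mod k, q mod k))"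

definition in_conv_Aut :: "nat \<Rightarrow> (complex mat \<Rightarrow> complex mat) \<Rightarrow> bool" where
  "in_conv_Aut m T \<longleftrightarrow>
     (\<exists>N (c :: nat \<Rightarrow> real) (u :: nat \<Rightarrow> complex mat).
        (\<forall>l<N. c l \<ge> 0 \<and> unitary m (u l)) \<and> (\<Sum>l<N. c l) = 1 \<and>
        (\<forall>x \<in> carrier_mat m m.
           T x = mat m m (\<lambda>(p,q). \<Sum>l<N. complex_of_real (c l) * (adj (u l) * x * u l) $$ (p,q))))"

definition HW_factorizable_deg :: "nat \<Rightarrow> nat \<Rightarrow> bool" where
  "HW_factorizable_deg n k \<longleftrightarrow>
     in_conv_Aut (n*k) (tensor_map n k (holevo_werner n) (depol k))"

end

theory Submission
  imports Defs "Jordan_Normal_Form.Determinant" "HOL-Combinatorics.Permutations"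
begin

lemma mult_entry: assumes "A \<in> carrier_mat n m" "B \<in> carrier_mat m k" "i<n" "j<k"
  shows "(A*B)$$(i,j) = (\<Sum>l<m. A$$(i,l)*B$$(l,j))"
  using assms by (auto simp: scalar_prod_def atLeast0LessThan intro!: sum.cong)

lemma idx_bound: "x<n \<Longrightarrow> c<k \<Longrightarrow> x*k+c < n*(k::nat)"
proof -
  assume "x<n" "c<k"
  then have "x*k+c < x*k+k" by simp
  also have "... = Suc x * k" by simp
  also have "... \<le> n*k" using \<open>x<n\<close> by (intro mult_le_mono1) simp
  finally show ?thesis .
qed

lemma sum_split: "(\<Sum>p<n*k. f p) = (\<Sum>x<n. \<Sum>c<k. f (x*k+c))" for n k :: nat
proof -
  have "(\<Sum>c<k. f (x*k+c)) = sum f {x*k..<x*k+k}" for x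
    by (rule sum.reindex_bij_witness[of _ "\<lambda>p. p - x*k" "\<lambda>c. x*k+c"]) auto
  then show ?thesis using sum.nat_group[of f k n] by simp
qed

lemma adj_carrier[simp]: "A \<in> carrier_mat n m \<Longrightarrow> adj A \<in> carrier_mat m n"
  by (simp add: adj_def)
lemma adj_dim[simp]: "dim_row (adj A) = dim_col A" "dim_col (adj A) = dim_row A"
  by (simp_all add: adj_def)
lemma adj_index[simp]: "i < dim_col A \<Longrightarrow> j < dim_row A \<Longrightarrow> adj A $$ (i,j) = cnj (A$$(j,i))"
  by (simp add: adj_def)

lemma kron_carrier[simp]: "kron n k A B \<in> carrier_mat (n*k) (n*k)"
  by (simp add: kron_def)

lemma kron_index: "x<n \<Longrightarrow> y<n \<Longrightarrow> c<k \<Longrightarrow> d<k \<Longrightarrow>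
   kron n k A B $$ (x*k+c, y*k+d) = A$$(x,y) * B$$(c,d)"
proof -
  assume a: "x<n" "y<n" "c<k" "d<k"
  have "x*k+c < n*k" "y*k+d < n*k"
    using a by (simp_all add: idx_bound)
  then show ?thesis using a by (simp add: kron_def)
qed


definition kap :: "complex mat \<Rightarrow> nat \<Rightarrow> nat \<Rightarrow> nat \<Rightarrow> nat \<Rightarrow> complex" where
  "kap V t t' r s = (\<Sum>d<4. \<Sum>c<4. cnj (V$$(t*4+c, r*4+d)) * V$$(t'*4+c, s*4+d)) / 4"

definition Lin :: "nat \<Rightarrow> (nat \<Rightarrow> nat \<Rightarrow> nat \<Rightarrow> nat \<Rightarrow> complex) \<Rightarrow> complex mat \<Rightarrow> complex mat" where
  "Lin n \<kappa> Y = mat n n (\<lambda>(r,s). \<Sum>t<n. \<Sum>t'<n. Y$$(t,t') * \<kappa> t t' r s)"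

lemma rot3: "(\<Sum>a\<in>A. \<Sum>b\<in>B. \<Sum>c\<in>C. G a b c) = (\<Sum>c\<in>C. \<Sum>a\<in>A. \<Sum>b\<in>B. G a b c)"
proof -
  have "(\<Sum>a\<in>A. \<Sum>b\<in>B. \<Sum>c\<in>C. G a b c) = (\<Sum>a\<in>A. \<Sum>c\<in>C. \<Sum>b\<in>B. G a b c)"
    by (rule sum.cong[OF refl], rule sum.swap)
  also have "... = (\<Sum>c\<in>C. \<Sum>a\<in>A. \<Sum>b\<in>B. G a b c)" by (rule sum.swap)
  finally show ?thesis .
qed

lemma rot3': "(\<Sum>a\<in>A. \<Sum>b\<in>B. \<Sum>c\<in>C. G a b c) = (\<Sum>b\<in>B. \<Sum>c\<in>C. \<Sum>a\<in>A. G a b c)"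
proof -
  have "(\<Sum>a\<in>A. \<Sum>b\<in>B. \<Sum>c\<in>C. G a b c) = (\<Sum>b\<in>B. \<Sum>a\<in>A. \<Sum>c\<in>C. G a b c)"
    by (rule sum.swap)
  also have "... = (\<Sum>b\<in>B. \<Sum>c\<in>C. \<Sum>a\<in>A. G a b c)" by (rule sum.cong[OF refl], rule sum.swap)
  finally show ?thesis .
qed

lemma AdK_entry:
  assumes V: "V \<in> carrier_mat (n*4) (n*4)" and Y: "Y \<in> carrier_mat n n"
    and p: "p < n*4" and q: "q < n*4"
  shows "(adj V * kron n 4 Y (1\<^sub>m 4) * V)$$(p,q) =
     (\<Sum>t<n. \<Sum>t'<n. Y$$(t,t') * (\<Sum>c<4. cnj (V$$(t*4+c,p)) * V$$(t'*4+c,q)))"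
proof -
  let ?K = "kron n 4 Y (1\<^sub>m 4)"
  have AK: "adj V * ?K \<in> carrier_mat (n*4) (n*4)" using V by (metis adj_carrier kron_carrier mult_carrier_mat)
  have "(adj V * ?K * V)$$(p,q) = (\<Sum>l<n*4. (adj V * ?K)$$(p,l) * V$$(l,q))"
    by (rule mult_entry[OF AK V p q])
  also have "... = (\<Sum>l<n*4. (\<Sum>k<n*4. cnj (V$$(k,p)) * ?K$$(k,l)) * V$$(l,q))"
    by (intro sum.cong refl, subst mult_entry[of _ "n*4" "n*4"], insert V p, auto)
  also have "... = (\<Sum>t'<n. \<Sum>c'<4. (\<Sum>t<n. \<Sum>c<4. cnj (V$$(t*4+c,p)) * 
       (Y$$(t,t') * (if c = c' then 1 else 0))) * V$$(t'*4+c',q))"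
    by (simp add: sum_split kron_index)
  also have "... = (\<Sum>t'<n. \<Sum>c'<4. (\<Sum>t<n. cnj (V$$(t*4+c',p)) * Y$$(t,t')) * V$$(t'*4+c',q))"
    by (simp add: if_distrib cong: if_cong)
  also have "... = (\<Sum>t'<n. \<Sum>c'<4. \<Sum>t<n. cnj (V$$(t*4+c',p)) * Y$$(t,t') * V$$(t'*4+c',q))"
    by (simp add: sum_distrib_right)
  also have "... = (\<Sum>t<n. \<Sum>t'<n. \<Sum>c'<4. cnj (V$$(t*4+c',p)) * Y$$(t,t') * V$$(t'*4+c',q))"
    by (rule rot3)
  also have "... = (\<Sum>t<n. \<Sum>t'<n. Y$$(t,t') * (\<Sum>c<4. cnj (V$$(t*4+c,p)) * V$$(t'*4+c,q)))"
    by (intro sum.cong refl) (simp add: sum_distrib_left mult.assoc mult.left_commute)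
  finally show ?thesis .
qed

lemma GEN:
  assumes V: "V \<in> carrier_mat (n*4) (n*4)" and Y: "Y \<in> carrier_mat n n"
  shows "id_tensor_ntr n 4 (adj V * kron n 4 Y (1\<^sub>m 4) * V) = Lin n (kap V) Y"
proof (rule eq_matI)
  fix r s assume r: "r < dim_row (Lin n (kap V) Y)" and s: "s < dim_col (Lin n (kap V) Y)"
  then have rs: "r<n" "s<n" by (auto simp: Lin_def)
  have "id_tensor_ntr n 4 (adj V * kron n 4 Y (1\<^sub>m 4) * V) $$ (r,s) =
     (\<Sum>a<4. (\<Sum>t<n. \<Sum>t'<n. Y$$(t,t') * (\<Sum>c<4. cnj (V$$(t*4+c,r*4+a)) * V$$(t'*4+c,s*4+a)))) / 4"
    using rs by (simp add: id_tensor_ntr_def AdK_entry[OF V Y] idx_bound)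
  also have "... = (\<Sum>t<n. \<Sum>t'<n. \<Sum>a<4. Y$$(t,t') * (\<Sum>c<4. cnj (V$$(t*4+c,r*4+a)) * V$$(t'*4+c,s*4+a))) / 4"
    by (subst rot3') (rule refl)
  also have "... = (\<Sum>t<n. \<Sum>t'<n. Y$$(t,t') * ((\<Sum>a<4. \<Sum>c<4. cnj (V$$(t*4+c,r*4+a)) * V$$(t'*4+c,s*4+a)) / 4))"
    by (simp add: sum_divide_distrib sum_distrib_left)
  also have "... = Lin n (kap V) Y $$ (r,s)"
    using rs by (simp add: Lin_def kap_def)
  finally show "id_tensor_ntr n 4 (adj V * kron n 4 Y (1\<^sub>m 4) * V) $$ (r,s) = Lin n (kap V) Y $$ (r,s)" .
qed (auto simp: id_tensor_ntr_def Lin_def)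

definition kapW :: "nat \<Rightarrow> nat \<Rightarrow> nat \<Rightarrow> nat \<Rightarrow> nat \<Rightarrow> complex" where
  "kapW n t t' r s = (if t = t' \<and> r = s \<and> t \<noteq> r then 1 / (of_nat n - 1)
      else if t = s \<and> t' = r \<and> r \<noteq> s then - (1 / (of_nat n - 1)) else 0)"

lemma hw_index: assumes Y: "Y \<in> carrier_mat n n" and rs: "r<n" "s<n"
  shows "holevo_werner n Y $$ (r,s) = (if r = s then tr Y else 0)/(of_nat n - 1) - Y$$(s,r)/(of_nat n - 1)"
proof -
  have "holevo_werner n Y $$ (r,s) = (1 / (of_nat n - 1)) * ((if r = s then tr Y else 0) - Y$$(s,r))"
    using Y rs by (simp add: holevo_werner_def)
  then show ?thesis by (simp add: right_diff_distrib)
qed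

lemma LinW: assumes Y: "Y \<in> carrier_mat n n" shows "holevo_werner n Y = Lin n (kapW n) Y"
proof (rule eq_matI)
  fix r s assume "r < dim_row (Lin n (kapW n) Y)" "s < dim_col (Lin n (kapW n) Y)"
  then have rs: "r<n" "s<n" by (auto simp: Lin_def)
  show "holevo_werner n Y $$ (r,s) = Lin n (kapW n) Y $$ (r,s)"
  proof (cases "r = s")
    case True
    have inner: "(\<Sum>t'<n. Y$$(t,t') * kapW n t t' r r) = Y$$(t,t)/(of_nat n - 1) - (if t = r then Y$$(t,t)/(of_nat n - 1) else 0)"
      if "t<n" for t
    proof -
      have "(\<Sum>t'<n. Y$$(t,t') * kapW n t t' r r) = (\<Sum>t'<n. if t' = t then (if t\<noteq>r then Y$$(t,t)/(of_nat n - 1) else 0) else 0)"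
        by (rule sum.cong) (auto simp: kapW_def)
      then show ?thesis using that by (simp add: sum.delta')
    qed
    have "Lin n (kapW n) Y $$ (r,s) = (\<Sum>t<n. Y$$(t,t)/(of_nat n - 1) - (if t = r then Y$$(t,t)/(of_nat n - 1) else 0))"
      using rs True inner by (simp add: Lin_def)
    also have "... = (\<Sum>t<n. Y$$(t,t)) / (of_nat n - 1) - Y$$(r,r) / (of_nat n - 1)"
      using rs by (simp add: sum_subtractf sum_divide_distrib sum.delta)
    finally have L: "Lin n (kapW n) Y $$ (r,s) = (\<Sum>t<n. Y$$(t,t)) / (of_nat n - 1) - Y$$(r,r) / (of_nat n - 1)" .
    have trY: "tr Y = (\<Sum>t<n. Y$$(t,t))" using Y by (simp add: tr_def)
    have "holevo_werner n Y $$ (r,s) = tr Y/(of_nat n - 1) - Y$$(r,r)/(of_nat n - 1)"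
      using hw_index[OF Y rs] True by simp
    then show ?thesis unfolding L trY .
  next
    case False
    have inner: "(\<Sum>t'<n. Y$$(t,t') * kapW n t t' r s) = (if t = s then - (Y$$(s,r)/(of_nat n - 1)) else 0)" for t
    proof -
      have "(\<Sum>t'<n. Y$$(t,t') * kapW n t t' r s) = (\<Sum>t'<n. if t' = r then (if t = s then - (Y$$(s,r)/(of_nat n - 1)) else 0) else 0)"
        by (rule sum.cong) (use False in \<open>auto simp: kapW_def\<close>)
      then show ?thesis using rs by (simp add: sum.delta')
    qed
    have "Lin n (kapW n) Y $$ (r,s) = (\<Sum>t<n. if t = s then - (Y$$(s,r)/(of_nat n - 1)) else 0)"
      using rs by (simp add: Lin_def inner)
    also have "... = - (Y$$(s,r) / (of_nat n - 1))" using rs by (simp add: sum.delta')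
    finally have "Lin n (kapW n) Y $$ (r,s) = - (Y$$(s,r) / (of_nat n - 1))" .
    then show ?thesis using rs Y False by (simp add: hw_index)
  qed
qed (use Y in \<open>auto simp: holevo_werner_def Lin_def\<close>)

type_synonym q4 = "int \<times> int \<times> int \<times> int"
fun qmul :: "q4 \<Rightarrow> q4 \<Rightarrow> q4" where
 "qmul (a,b,c,d) (a',b',c',d') = (a*a' - b*b' - c*c' + d*d', a*b' + b*a' - b*b' - c*d' - d*c' + d*d',
    a*c' - b*d' + c*a' - d*b', a*d' + b*c' - b*d' + c*b' + d*a' - d*b')"
fun qadd :: "q4 \<Rightarrow> q4 \<Rightarrow> q4" where
 "qadd (a,b,c,d) (a',b',c',d') = (a+a',b+b',c+c',d+d')"
fun qcnj :: "q4 \<Rightarrow> q4" where "qcnj (a,b,c,d) = (a-b, -b, d-c, d)"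

fun qsumN :: "(nat \<Rightarrow> q4) \<Rightarrow> nat \<Rightarrow> q4" where
 "qsumN f n = (if n = 0 then (0,0,0,0) else qadd (qsumN f (n-1)) (f (n-1)))"
declare qsumN.simps[simp del]

definition om :: complex where "om = Complex (-1/2) (sqrt 3 / 2)"

lemma om_sq: "om * om = -1 - om"
  by (simp add: om_def complex_eq_iff)
lemma om_cnj: "cnj om = -1 - om"
  by (simp add: om_def complex_eq_iff)

fun emb :: "q4 \<Rightarrow> complex" where
  "emb (a,b,c,d) = of_int a + of_int b * om + \<i> * (of_int c + of_int d * om)"

lemma mul_gen: fixes w j A B C D A' B' C' D' :: complex
  assumes "w*w = -1-w" "j*j = -1"
  shows "(A*A' - B*B' - C*C' + D*D') + (A*B' + B*A' - B*B' - C*D' - D*C' + D*D')*w + j*((A*C' - B*D' + C*A' - D*B') + (A*D' + B*C' - B*D' + C*B' + D*A' - D*B')*w)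
   = (A + B*w + j*(C+D*w))*(A'+B'*w+j*(C'+D'*w))"
  using assms by Groebner_Basis.algebra

lemma cnj_gen: fixes w j A B C D cw :: complex
  assumes "cw = -1-w"
  shows "(A - B) + (- B)*w + j*((D - C) + D*w) = A + B*cw + (-j)*(C + D*cw)"
  using assms by Groebner_Basis.algebra

lemma emb_mul: "emb (qmul x y) = emb x * emb y"
proof -
  obtain a b c d where x: "x = (a,b,c,d)" by (cases x) auto
  obtain a' b' c' d' where y: "y = (a',b',c',d')" by (cases y) auto
  have h1: "om * om = -1 - om" by (rule om_sq)
  have h2: "\<i> * \<i> = -1" by simp
  show ?thesis unfolding x y
    by (simp only: qmul.simps emb.simps of_int_add of_int_diff of_int_mult) (rule mul_gen[OF h1 h2])
qed

lemma emb_add: "emb (qadd x y) = emb x + emb y"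
  by (cases x; cases y) (simp add: algebra_simps)

lemma emb_cnj: "emb (qcnj x) = cnj (emb x)"
proof -
  obtain a b c d where x: "x = (a,b,c,d)" by (cases x) auto
  have h1: "cnj om = -1 - om" by (rule om_cnj)
  show ?thesis unfolding x
    by (simp only: qcnj.simps emb.simps of_int_add of_int_diff of_int_minus complex_cnj_add complex_cnj_mult complex_cnj_of_int complex_cnj_i)
       (rule cnj_gen[OF h1])
qed

lemma emb_sum: "emb (qsumN f n) = (\<Sum>k<n. emb (f k))"
  by (induction n) (simp_all add: qsumN.simps emb_add)

definition tbl :: "q4 list list" where "tbl = [[(0,0,0,0),(0,0,0,0),(0,0,0,0),(0,0,0,0),(0,0,1,0),(0,0,0,0),(0,0,0,0),(0,0,0,0),(0,0,0,0),(0,0,0,0),(0,0,0,0),(0,-1,0,0),(0,0,0,0),(0,0,0,0),(0,0,0,0),(0,0,0,1),(0,0,0,0),(0,0,0,0),(-1,0,0,0),(0,0,0,0)],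
 [(0,0,0,0),(0,0,0,0),(0,0,0,0),(0,0,0,0),(0,0,0,0),(0,0,1,0),(0,0,0,0),(0,0,0,0),(0,0,0,0),(0,0,0,0),(0,-1,0,0),(0,0,0,0),(0,0,0,0),(0,0,0,0),(0,0,0,-1),(0,0,0,0),(0,0,0,0),(0,0,0,0),(0,0,0,0),(1,0,0,0)],
 [(0,0,0,0),(0,0,0,0),(0,0,0,0),(0,0,0,0),(0,0,0,0),(0,0,0,0),(0,0,-1,0),(0,0,0,0),(0,0,0,0),(0,1,0,0),(0,0,0,0),(0,0,0,0),(0,0,0,0),(0,0,0,-1),(0,0,0,0),(0,0,0,0),(1,0,0,0),(0,0,0,0),(0,0,0,0),(0,0,0,0)],
 [(0,0,0,0),(0,0,0,0),(0,0,0,0),(0,0,0,0),(0,0,0,0),(0,0,0,0),(0,0,0,0),(0,0,-1,0),(0,1,0,0),(0,0,0,0),(0,0,0,0),(0,0,0,0),(0,0,0,1),(0,0,0,0),(0,0,0,0),(0,0,0,0),(0,0,0,0),(-1,0,0,0),(0,0,0,0),(0,0,0,0)],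
 [(0,0,-1,0),(0,0,0,0),(0,0,0,0),(0,0,0,0),(0,0,0,0),(0,0,0,0),(0,0,0,0),(0,0,0,0),(0,0,0,0),(0,0,0,0),(0,0,0,0),(0,0,1,0),(0,0,0,0),(0,0,0,0),(0,0,0,0),(0,1,0,0),(0,0,0,0),(0,0,0,0),(0,0,0,1),(0,0,0,0)],
 [(0,0,0,0),(0,0,-1,0),(0,0,0,0),(0,0,0,0),(0,0,0,0),(0,0,0,0),(0,0,0,0),(0,0,0,0),(0,0,0,0),(0,0,0,0),(0,0,1,0),(0,0,0,0),(0,0,0,0),(0,0,0,0),(0,-1,0,0),(0,0,0,0),(0,0,0,0),(0,0,0,0),(0,0,0,0),(0,0,0,-1)],
 [(0,0,0,0),(0,0,0,0),(0,0,1,0),(0,0,0,0),(0,0,0,0),(0,0,0,0),(0,0,0,0),(0,0,0,0),(0,0,0,0),(0,0,1,0),(0,0,0,0),(0,0,0,0),(0,0,0,0),(0,1,0,0),(0,0,0,0),(0,0,0,0),(0,0,0,1),(0,0,0,0),(0,0,0,0),(0,0,0,0)],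
 [(0,0,0,0),(0,0,0,0),(0,0,0,0),(0,0,1,0),(0,0,0,0),(0,0,0,0),(0,0,0,0),(0,0,0,0),(0,0,1,0),(0,0,0,0),(0,0,0,0),(0,0,0,0),(0,-1,0,0),(0,0,0,0),(0,0,0,0),(0,0,0,0),(0,0,0,0),(0,0,0,-1),(0,0,0,0),(0,0,0,0)],
 [(0,0,0,0),(0,0,0,0),(0,0,0,0),(0,1,0,0),(0,0,0,0),(0,0,0,0),(0,0,0,0),(0,0,-1,0),(0,0,0,0),(0,0,0,0),(0,0,0,0),(0,0,0,0),(0,0,1,0),(0,0,0,0),(0,0,0,0),(0,0,0,0),(0,0,0,0),(0,-1,0,0),(0,0,0,0),(0,0,0,0)],
 [(0,0,0,0),(0,0,0,0),(0,1,0,0),(0,0,0,0),(0,0,0,0),(0,0,0,0),(0,0,-1,0),(0,0,0,0),(0,0,0,0),(0,0,0,0),(0,0,0,0),(0,0,0,0),(0,0,0,0),(0,0,-1,0),(0,0,0,0),(0,0,0,0),(0,1,0,0),(0,0,0,0),(0,0,0,0),(0,0,0,0)],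
 [(0,0,0,0),(0,-1,0,0),(0,0,0,0),(0,0,0,0),(0,0,0,0),(0,0,-1,0),(0,0,0,0),(0,0,0,0),(0,0,0,0),(0,0,0,0),(0,0,0,0),(0,0,0,0),(0,0,0,0),(0,0,0,0),(0,0,1,0),(0,0,0,0),(0,0,0,0),(0,0,0,0),(0,0,0,0),(0,-1,0,0)],
 [(0,-1,0,0),(0,0,0,0),(0,0,0,0),(0,0,0,0),(0,0,-1,0),(0,0,0,0),(0,0,0,0),(0,0,0,0),(0,0,0,0),(0,0,0,0),(0,0,0,0),(0,0,0,0),(0,0,0,0),(0,0,0,0),(0,0,0,0),(0,0,-1,0),(0,0,0,0),(0,0,0,0),(0,1,0,0),(0,0,0,0)],
 [(0,0,0,0),(0,0,0,0),(0,0,0,0),(0,0,0,-1),(0,0,0,0),(0,0,0,0),(0,0,0,0),(0,-1,0,0),(0,0,-1,0),(0,0,0,0),(0,0,0,0),(0,0,0,0),(0,0,0,0),(0,0,0,0),(0,0,0,0),(0,0,0,0),(0,0,0,0),(0,0,1,0),(0,0,0,0),(0,0,0,0)],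
 [(0,0,0,0),(0,0,0,0),(0,0,0,1),(0,0,0,0),(0,0,0,0),(0,0,0,0),(0,1,0,0),(0,0,0,0),(0,0,0,0),(0,0,1,0),(0,0,0,0),(0,0,0,0),(0,0,0,0),(0,0,0,0),(0,0,0,0),(0,0,0,0),(0,0,1,0),(0,0,0,0),(0,0,0,0),(0,0,0,0)],
 [(0,0,0,0),(0,0,0,1),(0,0,0,0),(0,0,0,0),(0,0,0,0),(0,-1,0,0),(0,0,0,0),(0,0,0,0),(0,0,0,0),(0,0,0,0),(0,0,-1,0),(0,0,0,0),(0,0,0,0),(0,0,0,0),(0,0,0,0),(0,0,0,0),(0,0,0,0),(0,0,0,0),(0,0,0,0),(0,0,1,0)],
 [(0,0,0,-1),(0,0,0,0),(0,0,0,0),(0,0,0,0),(0,1,0,0),(0,0,0,0),(0,0,0,0),(0,0,0,0),(0,0,0,0),(0,0,0,0),(0,0,0,0),(0,0,1,0),(0,0,0,0),(0,0,0,0),(0,0,0,0),(0,0,0,0),(0,0,0,0),(0,0,0,0),(0,0,1,0),(0,0,0,0)],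
 [(0,0,0,0),(0,0,0,0),(1,0,0,0),(0,0,0,0),(0,0,0,0),(0,0,0,0),(0,0,0,-1),(0,0,0,0),(0,0,0,0),(0,1,0,0),(0,0,0,0),(0,0,0,0),(0,0,0,0),(0,0,-1,0),(0,0,0,0),(0,0,0,0),(0,0,0,0),(0,0,0,0),(0,0,0,0),(0,0,0,0)],
 [(0,0,0,0),(0,0,0,0),(0,0,0,0),(-1,0,0,0),(0,0,0,0),(0,0,0,0),(0,0,0,0),(0,0,0,1),(0,-1,0,0),(0,0,0,0),(0,0,0,0),(0,0,0,0),(0,0,-1,0),(0,0,0,0),(0,0,0,0),(0,0,0,0),(0,0,0,0),(0,0,0,0),(0,0,0,0),(0,0,0,0)],
 [(-1,0,0,0),(0,0,0,0),(0,0,0,0),(0,0,0,0),(0,0,0,-1),(0,0,0,0),(0,0,0,0),(0,0,0,0),(0,0,0,0),(0,0,0,0),(0,0,0,0),(0,1,0,0),(0,0,0,0),(0,0,0,0),(0,0,0,0),(0,0,-1,0),(0,0,0,0),(0,0,0,0),(0,0,0,0),(0,0,0,0)],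
 [(0,0,0,0),(1,0,0,0),(0,0,0,0),(0,0,0,0),(0,0,0,0),(0,0,0,1),(0,0,0,0),(0,0,0,0),(0,0,0,0),(0,0,0,0),(0,-1,0,0),(0,0,0,0),(0,0,0,0),(0,0,0,0),(0,0,-1,0),(0,0,0,0),(0,0,0,0),(0,0,0,0),(0,0,0,0),(0,0,0,0)]]
"
definition Tb :: "nat \<Rightarrow> nat \<Rightarrow> q4" where "Tb p q = tbl ! p ! q"

definition chkU :: bool where "chkU = list_all (\<lambda>p. list_all (\<lambda>q.
   qsumN (\<lambda>k. qmul (qcnj (Tb k p)) (Tb k q)) 20 = (if p = q then (4,0,0,0) else (0,0,0,0))) [0..<20]) [0..<20]"

lemma chkU: chkU by code_simp

definition kq :: "nat \<Rightarrow> nat \<Rightarrow> nat \<Rightarrow> nat \<Rightarrow> q4" where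
  "kq t t' r s = (if t = t' \<and> r = s \<and> t \<noteq> r then (4,0,0,0)
      else if t = s \<and> t' = r \<and> r \<noteq> s then (-4,0,0,0) else (0,0,0,0))"

definition chkK :: bool where "chkK = list_all (\<lambda>t. list_all (\<lambda>t'. list_all (\<lambda>r. list_all (\<lambda>s.
   qsumN (\<lambda>d. qsumN (\<lambda>c. qmul (qcnj (Tb (t*4+c) (r*4+d))) (Tb (t'*4+c) (s*4+d))) 4) 4 = kq t t' r s)
   [0..<5]) [0..<5]) [0..<5]) [0..<5]"

lemma chkK: chkK by code_simp


definition u5 :: "complex mat" where "u5 = mat 20 20 (\<lambda>(p,q). emb (Tb p q) / 2)"

lemma u5_carrier: "u5 \<in> carrier_mat 20 20" by (simp add: u5_def)

lemma chkU': "p < 20 \<Longrightarrow> q < 20 \<Longrightarrow> qsumN (\<lambda>k. qmul (qcnj (Tb k p)) (Tb k q)) 20 = (if p = q then (4,0,0,0) else (0,0,0,0))"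
  using chkU by (simp add: chkU_def list_all_iff)

lemma u5_left: "adj u5 * u5 = 1\<^sub>m 20"
proof (rule eq_matI)
  fix p q assume "p < dim_row (1\<^sub>m 20 :: complex mat)" "q < dim_col (1\<^sub>m 20 :: complex mat)"
  then have pq: "p < 20" "q < 20" by auto
  have "(adj u5 * u5) $$ (p,q) = (\<Sum>k<20. cnj (u5 $$ (k,p)) * u5 $$ (k,q))"
    using pq u5_carrier by (subst mult_entry[of _ 20 20 _ 20]) auto
  also have "... = (\<Sum>k<20. emb (qmul (qcnj (Tb k p)) (Tb k q))) / 4"
    using pq by (simp add: u5_def sum_divide_distrib emb_mul emb_cnj)
  also have "... = emb (qsumN (\<lambda>k. qmul (qcnj (Tb k p)) (Tb k q)) 20) / 4"
    by (simp add: emb_sum)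
  also have "... = 1\<^sub>m 20 $$ (p,q)" using pq by (simp add: chkU')
  finally show "(adj u5 * u5) $$ (p,q) = 1\<^sub>m 20 $$ (p,q)" .
qed (auto simp: u5_def)

lemma u5_unitary: "unitary 20 u5"
  unfolding unitary_def using u5_left u5_carrier
  by (auto intro: mat_mult_left_right_inverse[of "adj u5" 20 u5])

lemma chkK': "t<5 \<Longrightarrow> t'<5 \<Longrightarrow> r<5 \<Longrightarrow> s<5 \<Longrightarrow>
   qsumN (\<lambda>d. qsumN (\<lambda>c. qmul (qcnj (Tb (t*4+c) (r*4+d))) (Tb (t'*4+c) (s*4+d))) 4) 4 = kq t t' r s"
  using chkK by (simp add: chkK_def list_all_iff)

lemma kap_u5: assumes "t<5" "t'<5" "r<5" "s<5" shows "kap u5 t t' r s = kapW 5 t t' r s"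
proof -
  have b: "x*4+c < 20" if "x<5" "c<4" for x c :: nat using idx_bound[OF that] by simp
  have "kap u5 t t' r s = (\<Sum>d<4. \<Sum>c<4. emb (qmul (qcnj (Tb (t*4+c) (r*4+d))) (Tb (t'*4+c) (s*4+d)))) / 16"
    using assms b by (simp add: kap_def u5_def emb_mul emb_cnj sum_divide_distrib)
  also have "... = emb (kq t t' r s) / 16"
    using chkK'[OF assms] by (simp add: emb_sum[symmetric])
  also have "... = kapW 5 t t' r s" by (simp add: kq_def kapW_def)
  finally show ?thesis .
qed

lemma Lin_cong: "(\<And>t t' r s. t<n \<Longrightarrow> t'<n \<Longrightarrow> r<n \<Longrightarrow> s<n \<Longrightarrow> k1 t t' r s = k2 t t' r s) \<Longrightarrow> Lin n k1 Y = Lin n k2 Y"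
  by (auto simp: Lin_def intro!: eq_matI sum.cong)

lemma part1: "\<exists>u. unitary (5*4) u \<and>
            (\<forall>x \<in> carrier_mat 5 5.
               holevo_werner 5 x = id_tensor_ntr 5 4 (adj u * kron 5 4 x (1\<^sub>m 4) * u))"
proof (intro exI conjI ballI)
  show "unitary (5*4) u5" using u5_unitary by simp
  fix x :: "complex mat" assume x: "x \<in> carrier_mat 5 5"
  have c: "u5 \<in> carrier_mat (5*4) (5*4)" using u5_carrier by simp
  show "holevo_werner 5 x = id_tensor_ntr 5 4 (adj u5 * kron 5 4 x (1\<^sub>m 4) * u5)"
    unfolding GEN[OF c x] LinW[OF x] by (rule Lin_cong) (simp add: kap_u5)
qed

lemma adj_mult: assumes "A \<in> carrier_mat n m" "B \<in> carrier_mat m k"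
  shows "adj (A * B) = adj B * adj A"
proof (rule eq_matI)
  fix i j assume "i < dim_row (adj B * adj A)" "j < dim_col (adj B * adj A)"
  then have ij: "i < k" "j < n" using assms by auto
  have "adj (A*B) $$ (i,j) = cnj ((A*B)$$(j,i))" using assms ij by simp
  also have "... = cnj (\<Sum>l<m. A$$(j,l) * B$$(l,i))"
    by (simp only: mult_entry[OF assms(1,2) ij(2,1)])
  also have "... = (\<Sum>l<m. cnj (B$$(l,i)) * cnj (A$$(j,l)))" by (simp add: mult.commute)
  also have "... = (adj B * adj A) $$ (i,j)"
    using assms ij by (subst mult_entry[of _ k m _ n]) auto
  finally show "adj (A*B) $$ (i,j) = (adj B * adj A) $$ (i,j)" .
qed (use assms in auto)

lemma unitary_mult: assumes "unitary m A" "unitary m B" shows "unitary m (A * B)"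
proof -
  have A: "A \<in> carrier_mat m m" "adj A * A = 1\<^sub>m m" "A * adj A = 1\<^sub>m m" using assms(1) by (auto simp: unitary_def)
  have B: "B \<in> carrier_mat m m" "adj B * B = 1\<^sub>m m" "B * adj B = 1\<^sub>m m" using assms(2) by (auto simp: unitary_def)
  have aA: "adj A \<in> carrier_mat m m" and aB: "adj B \<in> carrier_mat m m" using A B by auto
  have "adj (A*B) * (A*B) = adj B * (adj A * A) * B"
    unfolding adj_mult[OF A(1) B(1)]
    by (simp only: assoc_mult_mat[OF aB aA mult_carrier_mat[OF A(1) B(1)]] assoc_mult_mat[OF aB mult_carrier_mat[OF aA A(1)] B(1)] assoc_mult_mat[OF aA A(1) B(1)])
  also have "... = 1\<^sub>m m" using A B aB by (simp only: A(2)) simp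
  finally have 1: "adj (A*B) * (A*B) = 1\<^sub>m m" .
  have "(A*B) * adj (A*B) = A * (B * adj B) * adj A"
    unfolding adj_mult[OF A(1) B(1)]
    by (simp only: assoc_mult_mat[OF A(1) B(1) mult_carrier_mat[OF aB aA]] assoc_mult_mat[OF A(1) mult_carrier_mat[OF B(1) aB] aA] assoc_mult_mat[OF B(1) aB aA])
  also have "... = 1\<^sub>m m" using A B aA by (simp only: B(3)) simp
  finally have 2: "(A*B) * adj (A*B) = 1\<^sub>m m" .
  show ?thesis using 1 2 A B by (auto simp: unitary_def)
qed

definition msum :: "nat \<Rightarrow> 'i set \<Rightarrow> ('i \<Rightarrow> complex) \<Rightarrow> ('i \<Rightarrow> complex mat) \<Rightarrow> complex mat" where
  "msum m I a F = mat m m (\<lambda>(p,q). \<Sum>i\<in>I. a i * F i $$ (p,q))"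

lemma in_conv_Aut_msum: "in_conv_Aut m T \<longleftrightarrow> (\<exists>N (c :: nat \<Rightarrow> real) u.
        (\<forall>l<N. c l \<ge> 0 \<and> unitary m (u l)) \<and> (\<Sum>l<N. c l) = 1 \<and>
        (\<forall>x \<in> carrier_mat m m. T x = msum m {..<N} (\<lambda>l. complex_of_real (c l)) (\<lambda>l. adj (u l) * x * u l)))"
  by (simp add: in_conv_Aut_def msum_def)

lemma conv_intro:
  assumes fin: "finite I" and cu: "\<And>i. i \<in> I \<Longrightarrow> c i \<ge> 0 \<and> unitary m (u i)" and s: "sum c I = 1"
    and T: "\<And>x. x \<in> carrier_mat m m \<Longrightarrow> T x = msum m I (\<lambda>i. complex_of_real (c i)) (\<lambda>i. adj (u i) * x * u i)"
  shows "in_conv_Aut m T"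
proof -
  obtain h where h: "bij_betw h {..<card I} I"
    using fin ex_bij_betw_nat_finite lessThan_atLeast0 by metis
  have sumeq: "(\<Sum>l<card I. g (h l)) = sum g I" for g :: "_ \<Rightarrow> 'b::comm_monoid_add"
    using sum.reindex_bij_betw[OF h] .
  show ?thesis unfolding in_conv_Aut_msum
  proof (intro exI conjI allI impI ballI)
    fix l assume "l < card I"
    then have "h l \<in> I" using h bij_betwE by blast
    then show "c (h l) \<ge> 0" "unitary m (u (h l))" using cu by auto
  next
    show "(\<Sum>l<card I. c (h l)) = 1" using sum.reindex_bij_betw[OF h, of c] s by simp
  next
    fix x :: "complex mat" assume "x \<in> carrier_mat m m"
    then show "T x = msum m {..<card I} (\<lambda>l. complex_of_real (c (h l))) (\<lambda>l. adj (u (h l)) * x * u (h l))"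
    proof -
      have se: "(\<Sum>i<card I. f (h i)) = sum f I" for f :: "_ \<Rightarrow> complex"
        using sum.reindex_bij_betw[OF h] .
      show ?thesis using T[OF \<open>x \<in> carrier_mat m m\<close>] by (simp add: msum_def se[symmetric])
    qed
  qed
qed

lemma conv_elim:
  assumes "in_conv_Aut m T"
  obtains I :: "nat set" and c u where "finite I" "\<And>i. i \<in> I \<Longrightarrow> c i \<ge> 0 \<and> unitary m (u i)" "sum c I = 1"
    "\<And>x. x \<in> carrier_mat m m \<Longrightarrow> T x = msum m I (\<lambda>i. complex_of_real (c i)) (\<lambda>i. adj (u i) * x * u i)"
  using assms unfolding in_conv_Aut_msum by blast

lemma conv_ext: "in_conv_Aut m T \<Longrightarrow> (\<And>x. x \<in> carrier_mat m m \<Longrightarrow> T' x = T x) \<Longrightarrow> in_conv_Aut m T'"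
  by (auto simp: in_conv_Aut_def)

lemma conv_single: "unitary m U \<Longrightarrow> in_conv_Aut m (\<lambda>x. adj U * x * U)"
  by (rule conv_intro[of "{()}" "\<lambda>_. 1" _ "\<lambda>_. U"])
     (auto simp: msum_def unitary_def intro!: eq_matI)

lemma Ad_msum:
  assumes V: "V \<in> carrier_mat m m" and F: "\<And>i. i \<in> I \<Longrightarrow> F i \<in> carrier_mat m m"
  shows "adj V * msum m I a F * V = msum m I a (\<lambda>i. adj V * F i * V)"
proof (rule eq_matI)
  fix p q assume "p < dim_row (msum m I a (\<lambda>i. adj V * F i * V))" "q < dim_col (msum m I a (\<lambda>i. adj V * F i * V))"
  then have pq: "p < m" "q < m" by (auto simp: msum_def)
  have MS: "msum m I a F \<in> carrier_mat m m" by (simp add: msum_def)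
  have AK: "adj V * msum m I a F \<in> carrier_mat m m" using V MS by (metis adj_carrier mult_carrier_mat)
  have e: "(adj V * G * V) $$ (p,q) = (\<Sum>l<m. (\<Sum>k<m. cnj (V$$(k,p)) * G$$(k,l)) * V$$(l,q))"
    if G: "G \<in> carrier_mat m m" for G
  proof -
    have AG: "adj V * G \<in> carrier_mat m m" using V G by (metis adj_carrier mult_carrier_mat)
    have aV: "adj V \<in> carrier_mat m m" using V by simp
    have "(adj V * G * V) $$ (p,q) = (\<Sum>l<m. (adj V * G)$$(p,l) * V$$(l,q))"
      by (rule mult_entry[OF AG V pq])
    also have "... = (\<Sum>l<m. (\<Sum>k<m. adj V $$ (p,k) * G$$(k,l)) * V$$(l,q))"
      by (rule sum.cong[OF refl]) (simp add: mult_entry[OF aV G pq(1)])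
    also have "... = (\<Sum>l<m. (\<Sum>k<m. cnj (V$$(k,p)) * G$$(k,l)) * V$$(l,q))"
      using V pq by simp
    finally show ?thesis .
  qed
  have "(adj V * msum m I a F * V) $$ (p,q) =
      (\<Sum>l<m. (\<Sum>k<m. cnj (V$$(k,p)) * (\<Sum>i\<in>I. a i * F i $$ (k,l))) * V$$(l,q))"
    by (subst e) (auto simp: msum_def intro!: sum.cong)
  also have "... = (\<Sum>i\<in>I. a i * (\<Sum>l<m. (\<Sum>k<m. cnj (V$$(k,p)) * F i $$ (k,l)) * V$$(l,q)))"
    (is "?L = ?R")
  proof -
    have "?L = (\<Sum>l<m. \<Sum>k<m. \<Sum>i\<in>I. cnj (V$$(k,p)) * (a i * F i $$ (k,l)) * V$$(l,q))"
      by (simp add: sum_distrib_left sum_distrib_right)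
    also have "... = (\<Sum>i\<in>I. \<Sum>l<m. \<Sum>k<m. cnj (V$$(k,p)) * (a i * F i $$ (k,l)) * V$$(l,q))"
      by (rule rot3)
    also have "... = ?R"
      by (simp add: sum_distrib_left sum_distrib_right mult.assoc mult.left_commute)
    finally show ?thesis .
  qed
  also have "... = msum m I a (\<lambda>i. adj V * F i * V) $$ (p,q)"
    using pq F by (simp add: msum_def e)
  finally show "(adj V * msum m I a F * V) $$ (p,q) = msum m I a (\<lambda>i. adj V * F i * V) $$ (p,q)" .
qed (use V in \<open>auto simp: msum_def\<close>)


lemma Ad_Ad: assumes x: "x \<in> carrier_mat m m" and A: "A \<in> carrier_mat m m" and B: "B \<in> carrier_mat m m"
  shows "adj B * (adj A * x * A) * B = adj (A*B) * x * (A*B)"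
proof -
  have aA: "adj A \<in> carrier_mat m m" and aB: "adj B \<in> carrier_mat m m" using A B by auto
  have 1: "adj A * x \<in> carrier_mat m m" using aA x by (rule mult_carrier_mat)
  have 2: "adj A * x * A \<in> carrier_mat m m" using 1 A by (rule mult_carrier_mat)
  have 3: "adj B * adj A \<in> carrier_mat m m" using aB aA by (rule mult_carrier_mat)
  have 4: "adj B * adj A * x \<in> carrier_mat m m" using 3 x by (rule mult_carrier_mat)
  have "adj (A*B) * x * (A*B) = adj B * adj A * x * A * B"
    unfolding adj_mult[OF A B] using assoc_mult_mat[OF 4 A B] by simp
  also have "... = adj B * (adj A * x) * A * B"
    using assoc_mult_mat[OF aB aA x] by simp
  also have "... = adj B * (adj A * x * A) * B"
    using assoc_mult_mat[OF aB 1 A] by simp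
  finally show ?thesis by simp
qed

lemma msum_index: "p < m \<Longrightarrow> q < m \<Longrightarrow> msum m I a F $$ (p,q) = (\<Sum>i\<in>I. a i * F i $$ (p,q))"
  by (simp add: msum_def)

lemma msum_cong: "(\<And>i. i \<in> I \<Longrightarrow> F i = G i) \<Longrightarrow> msum m I a F = msum m I a G"
  by (auto simp: msum_def intro!: eq_matI sum.cong)

lemma conv_comp: assumes T1: "in_conv_Aut m T1" and T2: "in_conv_Aut m T2"
  shows "in_conv_Aut m (\<lambda>x. T2 (T1 x))"
proof -
  obtain I1 :: "nat set" and c1 u1 where I1: "finite I1" "\<And>i. i \<in> I1 \<Longrightarrow> c1 i \<ge> 0 \<and> unitary m (u1 i)" "sum c1 I1 = 1"
    "\<And>x. x \<in> carrier_mat m m \<Longrightarrow> T1 x = msum m I1 (\<lambda>i. complex_of_real (c1 i)) (\<lambda>i. adj (u1 i) * x * u1 i)"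
    using conv_elim[OF T1] by metis
  obtain I2 :: "nat set" and c2 u2 where I2: "finite I2" "\<And>i. i \<in> I2 \<Longrightarrow> c2 i \<ge> 0 \<and> unitary m (u2 i)" "sum c2 I2 = 1"
    "\<And>x. x \<in> carrier_mat m m \<Longrightarrow> T2 x = msum m I2 (\<lambda>i. complex_of_real (c2 i)) (\<lambda>i. adj (u2 i) * x * u2 i)"
    using conv_elim[OF T2] by metis
  have uc1: "u1 i \<in> carrier_mat m m" if "i \<in> I1" for i using I1(2)[OF that] by (simp add: unitary_def)
  have uc2: "u2 i \<in> carrier_mat m m" if "i \<in> I2" for i using I2(2)[OF that] by (simp add: unitary_def)
  show ?thesis
  proof (rule conv_intro[of "I1 \<times> I2" "\<lambda>(i,j). c1 i * c2 j" _ "\<lambda>(i,j). u1 i * u2 j"])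
    show "finite (I1 \<times> I2)" using I1 I2 by simp
    fix ij assume "ij \<in> I1 \<times> I2"
    then obtain i j where ij: "ij = (i,j)" "i \<in> I1" "j \<in> I2" by auto
    then show "(case ij of (i,j) \<Rightarrow> c1 i * c2 j) \<ge> 0 \<and> unitary m (case ij of (i,j) \<Rightarrow> u1 i * u2 j)"
      using I1(2) I2(2) by (auto intro: unitary_mult)
  next
    show "(\<Sum>ij\<in>I1 \<times> I2. case ij of (i,j) \<Rightarrow> c1 i * c2 j) = 1"
      using I1(3) I2(3) by (simp add: sum.cartesian_product[symmetric] sum_product[symmetric])
  next
    fix x :: "complex mat" assume x: "x \<in> carrier_mat m m"
    have Ac: "adj (u1 i) * x * u1 i \<in> carrier_mat m m" if "i \<in> I1" for i
      using uc1[OF that] x by (metis adj_carrier mult_carrier_mat)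
    have T1c: "T1 x \<in> carrier_mat m m" using I1(4)[OF x] by (simp add: msum_def)
    have "T2 (T1 x) = msum m I2 (\<lambda>j. complex_of_real (c2 j)) (\<lambda>j. adj (u2 j) * T1 x * u2 j)"
      by (rule I2(4)[OF T1c])
    also have "... = msum m I2 (\<lambda>j. complex_of_real (c2 j)) (\<lambda>j. msum m I1 (\<lambda>i. complex_of_real (c1 i))
           (\<lambda>i. adj (u1 i * u2 j) * x * (u1 i * u2 j)))"
    proof (rule msum_cong)
      fix j assume j: "j \<in> I2"
      have "adj (u2 j) * T1 x * u2 j = msum m I1 (\<lambda>i. complex_of_real (c1 i)) (\<lambda>i. adj (u2 j) * (adj (u1 i) * x * u1 i) * u2 j)"
        unfolding I1(4)[OF x] by (rule Ad_msum[OF uc2[OF j] Ac])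
      also have "... = msum m I1 (\<lambda>i. complex_of_real (c1 i)) (\<lambda>i. adj (u1 i * u2 j) * x * (u1 i * u2 j))"
        by (rule msum_cong) (simp add: Ad_Ad[OF x uc1 uc2[OF j]])
      finally show "adj (u2 j) * T1 x * u2 j = msum m I1 (\<lambda>i. complex_of_real (c1 i)) (\<lambda>i. adj (u1 i * u2 j) * x * (u1 i * u2 j))" .
    qed
    also have "... = msum m (I1 \<times> I2) (\<lambda>ij. complex_of_real (case ij of (i,j) \<Rightarrow> c1 i * c2 j))
        (\<lambda>ij. adj (case ij of (i,j) \<Rightarrow> u1 i * u2 j) * x * (case ij of (i,j) \<Rightarrow> u1 i * u2 j))"
    proof (rule eq_matI)
      fix p q assume "p < dim_row (msum m (I1 \<times> I2) (\<lambda>ij. complex_of_real (case ij of (i,j) \<Rightarrow> c1 i * c2 j))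
        (\<lambda>ij. adj (case ij of (i,j) \<Rightarrow> u1 i * u2 j) * x * (case ij of (i,j) \<Rightarrow> u1 i * u2 j)))"
        "q < dim_col (msum m (I1 \<times> I2) (\<lambda>ij. complex_of_real (case ij of (i,j) \<Rightarrow> c1 i * c2 j))
        (\<lambda>ij. adj (case ij of (i,j) \<Rightarrow> u1 i * u2 j) * x * (case ij of (i,j) \<Rightarrow> u1 i * u2 j)))"
      then have pq: "p < m" "q < m" by (auto simp: msum_def)
      have "(\<Sum>j\<in>I2. \<Sum>i\<in>I1. complex_of_real (c2 j) * (complex_of_real (c1 i) * (adj (u1 i * u2 j) * x * (u1 i * u2 j)) $$ (p,q)))
         = (\<Sum>i\<in>I1. \<Sum>j\<in>I2. complex_of_real (c2 j) * (complex_of_real (c1 i) * (adj (u1 i * u2 j) * x * (u1 i * u2 j)) $$ (p,q)))"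
        by (rule sum.swap)
      then show "msum m I2 (\<lambda>j. complex_of_real (c2 j)) (\<lambda>j. msum m I1 (\<lambda>i. complex_of_real (c1 i))
           (\<lambda>i. adj (u1 i * u2 j) * x * (u1 i * u2 j))) $$ (p,q) = msum m (I1 \<times> I2) (\<lambda>ij. complex_of_real (case ij of (i,j) \<Rightarrow> c1 i * c2 j))
        (\<lambda>ij. adj (case ij of (i,j) \<Rightarrow> u1 i * u2 j) * x * (case ij of (i,j) \<Rightarrow> u1 i * u2 j)) $$ (p,q)"
        using pq by (simp add: msum_index sum_distrib_left sum.cartesian_product mult.assoc mult.left_commute) (auto intro!: sum.cong)
    qed (simp_all add: msum_def)
    finally show "T2 (T1 x) = msum m (I1 \<times> I2) (\<lambda>ij. complex_of_real (case ij of (i,j) \<Rightarrow> c1 i * c2 j))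
        (\<lambda>ij. adj (case ij of (i,j) \<Rightarrow> u1 i * u2 j) * x * (case ij of (i,j) \<Rightarrow> u1 i * u2 j))" .
  qed
qed

lemma split_idx: "p < n*4 \<Longrightarrow> p = (p div 4)*4 + p mod 4 \<and> p div 4 < n \<and> p mod (4::nat) < 4"
  by (auto simp: less_mult_imp_div_less)

lemma eq_mat4: assumes "M \<in> carrier_mat (n*4) (n*4)" "N \<in> carrier_mat (n*4) (n*4)"
  and "\<And>x y a b. x<n \<Longrightarrow> y<n \<Longrightarrow> a<4 \<Longrightarrow> b<4 \<Longrightarrow> M$$(x*4+a,y*4+b) = N$$(x*4+a,y*4+b)"
  shows "M = N"
proof (rule eq_matI)
  fix p q assume "p < dim_row N" "q < dim_col N"
  then have "p < n*4" "q < n*4" using assms by auto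
  then show "M $$ (p,q) = N $$ (p,q)" using assms(3) split_idx by metis
qed (use assms in auto)

lemma Ad_entry4: assumes V: "V \<in> carrier_mat (n*4) (n*4)" and X: "X \<in> carrier_mat (n*4) (n*4)"
  and p: "p < n*4" and q: "q < n*4"
  shows "(adj V * X * V)$$(p,q) = (\<Sum>t<n. \<Sum>c<4. \<Sum>t'<n. \<Sum>c'<4. cnj (V$$(t*4+c,p)) * X$$(t*4+c,t'*4+c') * V$$(t'*4+c',q))"
proof -
  have AX: "adj V * X \<in> carrier_mat (n*4) (n*4)" using V X by (metis adj_carrier mult_carrier_mat)
  have aV: "adj V \<in> carrier_mat (n*4) (n*4)" using V by simp
  have "(adj V * X * V)$$(p,q) = (\<Sum>l<n*4. (adj V * X)$$(p,l) * V$$(l,q))"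
    by (rule mult_entry[OF AX V p q])
  also have "... = (\<Sum>l<n*4. (\<Sum>k<n*4. cnj (V$$(k,p)) * X$$(k,l)) * V$$(l,q))"
    by (rule sum.cong[OF refl]) (use V p in \<open>simp add: mult_entry[OF aV X p]\<close>)
  also have "... = (\<Sum>l<n*4. \<Sum>k<n*4. cnj (V$$(k,p)) * X$$(k,l) * V$$(l,q))"
    by (simp add: sum_distrib_right)
  also have "... = (\<Sum>k<n*4. \<Sum>l<n*4. cnj (V$$(k,p)) * X$$(k,l) * V$$(l,q))"
    by (rule sum.swap)
  also have "... = (\<Sum>t<n. \<Sum>c<4. \<Sum>t'<n. \<Sum>c'<4. cnj (V$$(t*4+c,p)) * X$$(t*4+c,t'*4+c') * V$$(t'*4+c',q))"
    by (simp only: sum_split)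
  finally show ?thesis .
qed

lemma left_unitary: assumes "V \<in> carrier_mat m m" "adj V * V = 1\<^sub>m m" shows "unitary m V"
  using assms mat_mult_left_right_inverse[of "adj V" m V] by (auto simp: unitary_def)

fun pz :: "nat \<Rightarrow> nat \<Rightarrow> nat \<Rightarrow> int" where
 "pz al x y = (if al = 0 then (if x = y then 1 else 0)
   else if al = 1 then (if x \<noteq> y then 1 else 0)
   else if al = 2 then (if x = y then (if x = 0 then 1 else -1) else 0)
   else (if x = 0 \<and> y = 1 then -1 else if x = 1 \<and> y = 0 then 1 else 0))"

definition wi :: "nat \<Rightarrow> nat \<Rightarrow> nat \<Rightarrow> int" where
  "wi g a c = pz (g div 4) (a div 2) (c div 2) * pz (g mod 4) (a mod 2) (c mod 2)"

definition chkW1 :: bool where "chkW1 = list_all (\<lambda>g. list_all (\<lambda>a. list_all (\<lambda>b.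
   sum_list (map (\<lambda>k. wi g k a * wi g k b) [0..<4]) = (if a = b then 1 else 0)) [0..<4]) [0..<4]) [0..<16]"
lemma chkW1: chkW1 by code_simp

definition chkW2 :: bool where "chkW2 = list_all (\<lambda>a. list_all (\<lambda>b. list_all (\<lambda>c. list_all (\<lambda>d.
   sum_list (map (\<lambda>g. wi g a c * wi g b d) [0..<16]) = (if a = b \<and> c = d then 4 else 0)) [0..<4]) [0..<4]) [0..<4]) [0..<4]"
lemma chkW2: chkW2 by code_simp

lemma sum_list_upt: "sum_list (map f [0..<n]) = (\<Sum>k<n. f k)"
  by (simp add: sum_set_upt_conv_sum_list_nat[symmetric] atLeast0LessThan)

lemma W1: "g < 16 \<Longrightarrow> a < 4 \<Longrightarrow> b < 4 \<Longrightarrow> (\<Sum>k<4. wi g k a * wi g k b) = (if a = b then 1 else 0)"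
  using chkW1 by (simp add: chkW1_def list_all_iff sum_list_upt)

lemma W2: "a < 4 \<Longrightarrow> b < 4 \<Longrightarrow> c < 4 \<Longrightarrow> d < 4 \<Longrightarrow> (\<Sum>g<16. wi g a c * wi g b d) = (if a = b \<and> c = d then 4 else 0)"
  using chkW2 by (simp add: chkW2_def list_all_iff sum_list_upt)

lemma W1c: assumes "g < 16" "a < 4" "b < 4"
  shows "(\<Sum>c<4. (of_int (wi g c a) :: complex) * of_int (wi g c b)) = (if a = b then 1 else 0)"
proof -
  have "(of_int (\<Sum>c<4. wi g c a * wi g c b) :: complex) = of_int (if a = b then 1 else 0)"
    using W1[OF assms] by simp
  then show ?thesis by simp
qed

lemma W2c: assumes "a < 4" "b < 4" "c < 4" "d < 4"
  shows "(\<Sum>g<16. (of_int (wi g a c) :: complex) * of_int (wi g b d)) = (if a = b \<and> c = d then 4 else 0)"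
proof -
  have "(of_int (\<Sum>g<16. wi g a c * wi g b d) :: complex) = of_int (if a = b \<and> c = d then 4 else 0)"
    using W2[OF assms] by simp
  then show ?thesis by simp
qed

definition KW :: "nat \<Rightarrow> nat \<Rightarrow> complex mat" where
  "KW n g = mat (n*4) (n*4) (\<lambda>(p,q). if p div 4 = q div 4 then of_int (wi g (p mod 4) (q mod 4)) else 0)"

lemma KW_carrier: "KW n g \<in> carrier_mat (n*4) (n*4)" by (simp add: KW_def)
lemma KW_dim[simp]: "dim_row (KW n g) = n*4" "dim_col (KW n g) = n*4" by (simp_all add: KW_def)

lemma KW_idx: "x<n \<Longrightarrow> y<n \<Longrightarrow> a<4 \<Longrightarrow> b<4 \<Longrightarrow> KW n g $$ (x*4+a, y*4+b) = (if x = y then of_int (wi g a b) else 0)"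
  by (simp add: KW_def idx_bound)

lemma KW_unitary: assumes g: "g < 16" shows "unitary (n*4) (KW n g)"
proof (rule left_unitary[OF KW_carrier], rule eq_mat4)
  show "adj (KW n g) * KW n g \<in> carrier_mat (n*4) (n*4)"
    using KW_carrier by (metis adj_carrier mult_carrier_mat)
  show "1\<^sub>m (n*4) \<in> carrier_mat (n*4) (n*4)" by simp
  fix x y a b :: nat assume xy: "x<n" "y<n" "a<4" "b<4"
  have aK: "adj (KW n g) \<in> carrier_mat (n*4) (n*4)" using KW_carrier by simp
  have "(adj (KW n g) * KW n g) $$ (x*4+a, y*4+b) = (\<Sum>l<n*4. adj (KW n g) $$ (x*4+a, l) * KW n g $$ (l, y*4+b))"
    by (rule mult_entry[OF aK KW_carrier]) (use xy in \<open>simp_all add: idx_bound\<close>)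
  also have "... = (\<Sum>t<n. \<Sum>c<4. adj (KW n g) $$ (x*4+a, t*4+c) * KW n g $$ (t*4+c, y*4+b))"
    by (simp only: sum_split)
  also have "... = (\<Sum>t<n. \<Sum>c<4. cnj (KW n g $$ (t*4+c, x*4+a)) * KW n g $$ (t*4+c, y*4+b))"
    using xy by (intro sum.cong refl) (simp add: idx_bound)
  also have "... = (\<Sum>t<n. if t = x then (if x = y then (\<Sum>c<4. of_int (wi g c a * wi g c b)) else 0) else 0)"
    using xy by (intro sum.cong refl) (auto simp: KW_idx sum_distrib_left)
  also have "... = (if x = y then (if a = b then 1 else 0) else 0)"
    using xy g by (simp add: W1c)
  also have "... = 1\<^sub>m (n*4) $$ (x*4+a, y*4+b)"
    using xy by (auto simp: idx_bound)
  finally show "(adj (KW n g) * KW n g) $$ (x*4+a, y*4+b) = 1\<^sub>m (n*4) $$ (x*4+a, y*4+b)" .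
qed

lemma sum_if_outer: assumes "x \<in> A" "finite A" shows "(\<Sum>t\<in>A. \<Sum>c\<in>C. if t = x then f c else 0) = sum f C"
proof -
  have "(\<Sum>t\<in>A. \<Sum>c\<in>C. if t = x then f c else 0) = (\<Sum>t\<in>A. if t = x then sum f C else 0)"
    by (rule sum.cong) auto
  then show ?thesis using assms by simp
qed

definition Emap :: "nat \<Rightarrow> complex mat \<Rightarrow> complex mat" where
  "Emap n X = kron n 4 (id_tensor_ntr n 4 X) (1\<^sub>m 4)"

lemma Emap_conv: "in_conv_Aut (n*4) (Emap n)"
proof (rule conv_intro[of "{..<16}" "\<lambda>_. 1/16" _ "KW n"])
  show "finite {..<16::nat}" by simp
  show "\<And>i. i \<in> {..<16} \<Longrightarrow> 0 \<le> (1/16::real) \<and> unitary (n*4) (KW n i)" using KW_unitary by auto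
  show "(\<Sum>i<16::nat. (1/16::real)) = 1" by simp
  fix X :: "complex mat" assume X: "X \<in> carrier_mat (n*4) (n*4)"
  show "Emap n X = msum (n*4) {..<16} (\<lambda>i. complex_of_real (1/16)) (\<lambda>i. adj (KW n i) * X * KW n i)"
  proof (rule eq_mat4)
    show "Emap n X \<in> carrier_mat (n*4) (n*4)" by (simp add: Emap_def)
    show "msum (n*4) {..<16} (\<lambda>i. complex_of_real (1/16)) (\<lambda>i. adj (KW n i) * X * KW n i) \<in> carrier_mat (n*4) (n*4)"
      by (simp add: msum_def)
    fix x y a b :: nat assume xy: "x<n" "y<n" "a<4" "b<4"
    have e: "(adj (KW n g) * X * KW n g) $$ (x*4+a, y*4+b) = (\<Sum>c<4. \<Sum>c'<4. of_int (wi g c a) * X$$(x*4+c,y*4+c') * of_int (wi g c' b))" for g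
    proof -
      have "(adj (KW n g) * X * KW n g) $$ (x*4+a, y*4+b) = (\<Sum>t<n. \<Sum>c<4. \<Sum>t'<n. \<Sum>c'<4.
          cnj (KW n g$$(t*4+c,x*4+a)) * X$$(t*4+c,t'*4+c') * KW n g$$(t'*4+c',y*4+b))"
        by (rule Ad_entry4[OF KW_carrier X]) (use xy in \<open>simp_all add: idx_bound\<close>)
      also have "... = (\<Sum>t<n. \<Sum>c<4. if t = x then (\<Sum>c'<4. of_int (wi g c a) * X$$(x*4+c,y*4+c') * of_int (wi g c' b)) else 0)"
      proof (intro sum.cong refl)
        fix t c assume tc: "t \<in> {..<n}" "c \<in> {..<4::nat}"
        have "(\<Sum>t'<n. \<Sum>c'<4. cnj (KW n g$$(t*4+c,x*4+a)) * X$$(t*4+c,t'*4+c') * KW n g$$(t'*4+c',y*4+b))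
           = (\<Sum>t'<n. if t' = y then (if t = x then (\<Sum>c'<4. of_int (wi g c a) * X$$(x*4+c,y*4+c') * of_int (wi g c' b)) else 0) else 0)"
          using xy tc by (intro sum.cong refl) (auto simp: KW_idx)
        also have "... = (if t = x then (\<Sum>c'<4. of_int (wi g c a) * X$$(x*4+c,y*4+c') * of_int (wi g c' b)) else 0)"
          using xy by simp
        finally show "(\<Sum>t'<n. \<Sum>c'<4. cnj (KW n g$$(t*4+c,x*4+a)) * X$$(t*4+c,t'*4+c') * KW n g$$(t'*4+c',y*4+b))
           = (if t = x then (\<Sum>c'<4. of_int (wi g c a) * X$$(x*4+c,y*4+c') * of_int (wi g c' b)) else 0)" .
      qed
      also have "... = (\<Sum>c<4. \<Sum>c'<4. of_int (wi g c a) * X$$(x*4+c,y*4+c') * of_int (wi g c' b))"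
        by (rule sum_if_outer) (use xy in auto)
      finally show ?thesis .
    qed
    have "msum (n*4) {..<16} (\<lambda>i. complex_of_real (1/16)) (\<lambda>i. adj (KW n i) * X * KW n i) $$ (x*4+a, y*4+b)
       = (\<Sum>g<16. (1/16) * (\<Sum>c<4. \<Sum>c'<4. of_int (wi g c a) * X$$(x*4+c,y*4+c') * of_int (wi g c' b)))"
      using xy by (simp add: msum_index idx_bound e)
    also have "... = (\<Sum>c<4. \<Sum>c'<4. X$$(x*4+c,y*4+c') * (\<Sum>g<16. (of_int (wi g c a) :: complex) * of_int (wi g c' b)) / 16)"
      apply (simp add: sum_distrib_left sum_divide_distrib)
      apply (subst rot3') apply (intro sum.cong refl)
      by (simp add: mult.commute mult.left_commute)
    also have "... = (\<Sum>c<4. \<Sum>c'<4. X$$(x*4+c,y*4+c') * (if c = c' \<and> a = b then 4 else 0) / 16)"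
      using xy by (intro sum.cong refl) (simp add: W2c)
    also have "... = (\<Sum>c<4. if a = b then X$$(x*4+c,y*4+c)/4 else 0)"
    proof (intro sum.cong refl)
      fix c assume c: "c \<in> {..<4::nat}"
      have "(\<Sum>c'<4. X$$(x*4+c,y*4+c') * (if c = c' \<and> a = b then 4 else 0) / 16) = (\<Sum>c'<4::nat. if c' = c then (if a = b then X$$(x*4+c,y*4+c)/4 else 0) else 0)"
        by (intro sum.cong refl) auto
      then show "(\<Sum>c'<4. X$$(x*4+c,y*4+c') * (if c = c' \<and> a = b then 4 else 0) / 16) = (if a = b then X$$(x*4+c,y*4+c)/4 else 0)"
        using c by simp
    qed
    also have "... = (if a = b then (\<Sum>c<4. X$$(x*4+c,y*4+c)) / 4 else 0)"
      by (simp add: sum_divide_distrib)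
    also have "... = Emap n X $$ (x*4+a, y*4+b)"
      using xy by (simp add: Emap_def kron_index id_tensor_ntr_def)
    finally show "Emap n X $$ (x*4+a, y*4+b) = msum (n*4) {..<16} (\<lambda>i. complex_of_real (1/16)) (\<lambda>i. adj (KW n i) * X * KW n i) $$ (x*4+a, y*4+b)"
      by simp
  qed
qed

lemma AV_entry4: assumes V: "V \<in> carrier_mat (n*4) (n*4)" and W: "W \<in> carrier_mat (n*4) (n*4)"
  and p: "p < n*4" and q: "q < n*4"
  shows "(adj V * W) $$ (p, q) = (\<Sum>t<n. \<Sum>c<4. cnj (V $$ (t*4+c, p)) * W $$ (t*4+c, q))"
proof -
  have aV: "adj V \<in> carrier_mat (n*4) (n*4)" using V by simp
  have "(adj V * W) $$ (p, q) = (\<Sum>l<n*4. adj V $$ (p, l) * W $$ (l, q))"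
    by (rule mult_entry[OF aV W p q])
  also have "... = (\<Sum>t<n. \<Sum>c<4. adj V $$ (p, t*4+c) * W $$ (t*4+c, q))"
    by (simp only: sum_split)
  also have "... = (\<Sum>t<n. \<Sum>c<4. cnj (V $$ (t*4+c, p)) * W $$ (t*4+c, q))"
    using V p by (intro sum.cong refl) (simp add: idx_bound)
  finally show ?thesis .
qed

lemma idx_inj: "d<4 \<Longrightarrow> e<4 \<Longrightarrow> (y*4+d = z*4+(e::nat)) \<longleftrightarrow> (y = z \<and> d = e)"
  by presburger

definition partner :: "nat \<Rightarrow> nat" where "partner x = (if odd x then x+1 else x-1)"
definition sg :: "nat \<Rightarrow> complex" where "sg x = (if odd x then 1 else -1)"

lemma partner_facts: assumes "odd n" "5 \<le> y" "y < n"
  shows "partner y < n" "5 \<le> partner y" "partner (partner y) = y" "partner y \<noteq> y"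
    "sg (partner y) = - sg y"
proof -
  show "partner y < n" using assms unfolding partner_def by (cases "odd y") (simp_all, presburger+)
  show "5 \<le> partner y" using assms unfolding partner_def by (cases "odd y") (simp_all, presburger)
  show "partner (partner y) = y"
  proof (cases "odd y")
    case True
    then have "partner y = y+1" "even (y+1)" by (simp_all add: partner_def)
    then show ?thesis by (simp add: partner_def)
  next
    case False
    then have "partner y = y-1" "odd (y-1)" using assms by (simp_all add: partner_def)
    then show ?thesis using assms by (simp add: partner_def)
  qed
  show "partner y \<noteq> y" using assms unfolding partner_def by (cases "odd y") simp_all
  show "sg (partner y) = - sg y"
  proof (cases "odd y")
    case True
    then have "partner y = y+1" "even (y+1)" by (simp_all add: partner_def)
    then show ?thesis using True by (simp add: sg_def)
  next
    case False
    then have "partner y = y-1" "odd (y-1)" using assms by (simp_all add: partner_def)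
    then show ?thesis using False by (simp add: sg_def)
  qed
qed

lemma partner_iff: assumes "odd n" "5 \<le> y" "y < n" "x < n"
  shows "(5 \<le> x \<and> y = partner x) \<longleftrightarrow> x = partner y"
proof
  assume "5 \<le> x \<and> y = partner x" then show "x = partner y" using partner_facts(3)[OF assms(1) _ assms(4)] by auto
next
  assume "x = partner y" then show "5 \<le> x \<and> y = partner x" using partner_facts(2,3)[OF assms(1-3)] by auto
qed

lemma sg_sq: "cnj (sg x) * sg x = 1" by (simp add: sg_def)
lemma partner_ne: "5 \<le> x \<Longrightarrow> partner x \<noteq> x" by (auto simp: partner_def)

definition V0 :: "nat \<Rightarrow> complex mat" where
 "V0 n = mat (n*4) (n*4) (\<lambda>(p,q). if p div 4 < 5 \<and> q div 4 < 5 then u5 $$ (p,q)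
     else if 5 \<le> p div 4 \<and> 5 \<le> q div 4 \<and> q div 4 = partner (p div 4) \<and> p mod 4 = q mod 4 then sg (p div 4) else 0)"

lemma V0_carrier: "V0 n \<in> carrier_mat (n*4) (n*4)" by (simp add: V0_def)

lemma V0_idx: "x<n \<Longrightarrow> y<n \<Longrightarrow> c<4 \<Longrightarrow> d<4 \<Longrightarrow> V0 n $$ (x*4+c, y*4+d) =
   (if x<5 \<and> y<5 then u5 $$ (x*4+c,y*4+d) else if 5 \<le> x \<and> 5 \<le> y \<and> y = partner x \<and> c = d then sg x else 0)"
  by (simp add: V0_def idx_bound)

lemma V0_unitary: assumes n: "odd n" "5 \<le> n" shows "unitary (n*4) (V0 n)"
proof (rule left_unitary[OF V0_carrier], rule eq_mat4)
  show "adj (V0 n) * V0 n \<in> carrier_mat (n*4) (n*4)"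
    using V0_carrier by (metis adj_carrier mult_carrier_mat)
  show "1\<^sub>m (n*4) \<in> carrier_mat (n*4) (n*4)" by simp
  fix y z d e :: nat assume yz: "y<n" "z<n" "d<4" "e<4"
  let ?V = "V0 n"
  have "(adj ?V * ?V) $$ (y*4+d, z*4+e) = (\<Sum>t<n. \<Sum>c<4. cnj (?V $$ (t*4+c, y*4+d)) * ?V $$ (t*4+c, z*4+e))"
    by (rule AV_entry4[OF V0_carrier V0_carrier]) (use yz in \<open>simp_all add: idx_bound\<close>)
  also have "... = (if y = z \<and> d = e then 1 else 0)"
  proof (cases "y < 5 \<and> z < 5")
    case True
    have "(\<Sum>t<n. \<Sum>c<4. cnj (?V $$ (t*4+c, y*4+d)) * ?V $$ (t*4+c, z*4+e))
        = (\<Sum>t<5. \<Sum>c<4. cnj (?V $$ (t*4+c, y*4+d)) * ?V $$ (t*4+c, z*4+e))"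
      using n yz True by (intro sum.mono_neutral_right) (auto simp: V0_idx)
    also have "... = (\<Sum>t<5. \<Sum>c<4. cnj (u5 $$ (t*4+c, y*4+d)) * u5 $$ (t*4+c, z*4+e))"
      using n yz True by (intro sum.cong refl) (auto simp: V0_idx)
    also have "... = (adj u5 * u5) $$ (y*4+d, z*4+e)"
      using AV_entry4[of u5 5 u5 "y*4+d" "z*4+e"] u5_carrier yz True idx_bound[of y 5 d 4] idx_bound[of z 5 e 4]
      by simp
    also have "... = (if y = z \<and> d = e then 1 else 0)"
      using u5_left yz True idx_bound[of y 5 d 4] idx_bound[of z 5 e 4] by (auto simp: idx_inj)
    finally show ?thesis .
  next
    case False
    show ?thesis
    proof (cases "y < 5 \<or> z < 5")
      case True
      then have "y \<noteq> z" using False by auto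
      have "(\<Sum>t<n. \<Sum>c<4. cnj (?V $$ (t*4+c, y*4+d)) * ?V $$ (t*4+c, z*4+e)) = 0"
        using yz True False by (intro sum.neutral ballI) (auto simp: V0_idx)
      then show ?thesis using \<open>y \<noteq> z\<close> by simp
    next
      case False2: False
      then have yz5: "5 \<le> y" "5 \<le> z" by auto
      have "(\<Sum>t<n. \<Sum>c<4. cnj (?V $$ (t*4+c, y*4+d)) * ?V $$ (t*4+c, z*4+e))
          = (\<Sum>t<n. if t = partner y then (if y = z \<and> d = e then 1 else 0) else 0)"
      proof (intro sum.cong refl)
        fix t assume t: "t \<in> {..<n}"
        show "(\<Sum>c<4. cnj (?V $$ (t*4+c, y*4+d)) * ?V $$ (t*4+c, z*4+e)) = (if t = partner y then (if y = z \<and> d = e then 1 else 0) else 0)"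
        proof (cases "t = partner y")
          case True
          have pt: "5 \<le> t" "partner t = y" using partner_facts[OF n(1) yz5(1)] yz True by auto
          have "(\<Sum>c<4. cnj (?V $$ (t*4+c, y*4+d)) * ?V $$ (t*4+c, z*4+e))
             = (\<Sum>c<4::nat. if c = d then (if y = z \<and> d = e then 1 else 0) else 0)"
            using yz t pt yz5 by (intro sum.cong refl) (auto simp: V0_idx sg_sq)
          then show ?thesis using True yz by simp
        next
          case False
          have "5 \<le> t \<Longrightarrow> y \<noteq> partner t" using partner_iff[OF n(1) yz5(1)] yz t False by auto
          then have "(\<Sum>c<4. cnj (?V $$ (t*4+c, y*4+d)) * ?V $$ (t*4+c, z*4+e)) = 0"
            using yz t yz5 by (intro sum.neutral ballI) (auto simp: V0_idx)
          then show ?thesis using False by simp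
        qed
      qed
      also have "... = (if y = z \<and> d = e then 1 else 0)"
        using partner_facts[OF n(1) yz5(1)] yz by simp
      finally show ?thesis .
    qed
  qed
  also have "... = 1\<^sub>m (n*4) $$ (y*4+d, z*4+e)"
    using yz by (auto simp: idx_bound idx_inj)
  finally show "(adj ?V * ?V) $$ (y*4+d, z*4+e) = 1\<^sub>m (n*4) $$ (y*4+d, z*4+e)" .
qed


lemma kap_V0_small: assumes "5 \<le> n" "t<5" "t'<5" "r<5" "s<5"
  shows "kap (V0 n) t t' r s = kapW 5 t t' r s"
proof -
  have "kap (V0 n) t t' r s = kap u5 t t' r s"
    unfolding kap_def using assms by (intro arg_cong[where f="\<lambda>x. x/4"] sum.cong refl) (simp add: V0_idx)
  then show ?thesis using kap_u5 assms by simp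
qed

lemma V0_zero_diag: "5 \<le> x \<Longrightarrow> x<n \<Longrightarrow> c<4 \<Longrightarrow> d<4 \<Longrightarrow> V0 n $$ (x*4+c, x*4+d) = 0"
  using partner_ne[of x] by (simp add: V0_idx)

lemma V0_antisym: assumes n: "odd n" and xy: "x<n" "y<n" "x \<noteq> y" "\<not> (x<5 \<and> y<5)" and cd: "c<4" "d<4"
  shows "V0 n $$ (x*4+c, y*4+d) = - V0 n $$ (y*4+c, x*4+d)"
proof (cases "x < 5 \<or> y < 5")
  case True
  then show ?thesis using xy cd by (auto simp: V0_idx)
next
  case False
  then have b: "5 \<le> x" "5 \<le> y" by auto
  show ?thesis
  proof (cases "y = partner x")
    case True
    then have "x = partner y" using partner_facts(3)[OF n b(1) xy(1)] by simp
    then show ?thesis using True b xy cd partner_facts(5)[OF n b(1) xy(1)] by (simp add: V0_idx)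
  next
    case False
    then have "x \<noteq> partner y" using partner_iff[OF n b(2) xy(2) xy(1)] b by auto
    then show ?thesis using False b xy cd by (simp add: V0_idx)
  qed
qed

lemma kap0_a: assumes "5 \<le> n" "x < n" shows "kap (V0 n) x x x x = 0"
proof (cases "x < 5")
  case True
  then show ?thesis using kap_V0_small[OF assms(1)] by (simp add: kapW_def)
next
  case False
  then show ?thesis using assms by (simp add: kap_def V0_zero_diag)
qed

lemma kap0_b: assumes "5 \<le> n" "x < n" "y < n" "x \<noteq> y" shows "kap (V0 n) x y x y = 0"
proof (cases "x < 5 \<and> y < 5")
  case True
  then show ?thesis using kap_V0_small[OF assms(1)] assms by (simp add: kapW_def)
next
  case False
  then show ?thesis using assms by (auto simp: kap_def V0_zero_diag)
qed

lemma kap0_c: assumes n: "odd n" "5 \<le> n" and xy: "x < n" "y < n" "x \<noteq> y"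
  shows "kap (V0 n) y x x y = - kap (V0 n) y y x x"
proof (cases "x < 5 \<and> y < 5")
  case True
  then show ?thesis using kap_V0_small[OF n(2)] xy by (simp add: kapW_def)
next
  case False
  have "kap (V0 n) y x x y = (\<Sum>d<4. \<Sum>c<4. - (cnj (V0 n $$ (y*4+c, x*4+d)) * V0 n $$ (y*4+c, x*4+d))) / 4"
    unfolding kap_def using V0_antisym[OF n(1) xy False] by (intro arg_cong[where f="\<lambda>x. x/4"] sum.cong refl) simp
  also have "... = - kap (V0 n) y y x x" by (simp add: kap_def sum_negf)
  finally show ?thesis .
qed

lemma kap_sum_unitary: assumes V: "V \<in> carrier_mat (n*4) (n*4)" and U: "adj V * V = 1\<^sub>m (n*4)" and r: "r < n"
  shows "(\<Sum>t<n. kap V t t r r) = 1"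
proof -
  have "(\<Sum>t<n. kap V t t r r) = (\<Sum>t<n. \<Sum>d<4. \<Sum>c<4. cnj (V$$(t*4+c, r*4+d)) * V$$(t*4+c, r*4+d)) / 4"
    by (simp add: kap_def sum_divide_distrib)
  also have "... = (\<Sum>d<4. \<Sum>t<n. \<Sum>c<4. cnj (V$$(t*4+c, r*4+d)) * V$$(t*4+c, r*4+d)) / 4"
    by (subst sum.swap) (rule refl)
  also have "... = (\<Sum>d<4. (adj V * V) $$ (r*4+d, r*4+d)) / 4"
    using r by (intro arg_cong[where f="\<lambda>x. x/4"] sum.cong refl) (simp add: AV_entry4[OF V V] idx_bound)
  also have "... = 1" using r U by (simp add: idx_bound)
  finally show ?thesis .
qed

definition chi :: "nat set \<Rightarrow> nat \<Rightarrow> complex" where "chi S x = (if x \<in> S then -1 else 1)"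

lemma chi_sq: "chi S x * chi S x = 1" by (simp add: chi_def)
lemma chi_cnj: "cnj (chi S x) = chi S x" by (simp add: chi_def)

definition Vs :: "nat \<Rightarrow> (nat \<Rightarrow> nat) \<Rightarrow> nat set \<Rightarrow> complex mat" where
  "Vs n \<sigma> S = mat (n*4) (n*4) (\<lambda>(p,q). chi S (p div 4) * chi S (q div 4) *
      V0 n $$ (\<sigma> (p div 4) * 4 + p mod 4, \<sigma> (q div 4) * 4 + q mod 4))"

lemma Vs_carrier: "Vs n \<sigma> S \<in> carrier_mat (n*4) (n*4)" by (simp add: Vs_def)

lemma Vs_idx: "x<n \<Longrightarrow> y<n \<Longrightarrow> c<4 \<Longrightarrow> d<4 \<Longrightarrow>
   Vs n \<sigma> S $$ (x*4+c, y*4+d) = chi S x * chi S y * V0 n $$ (\<sigma> x * 4 + c, \<sigma> y * 4 + d)"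
  by (simp add: Vs_def idx_bound)

lemma perm_lt: "\<sigma> permutes {..<n} \<Longrightarrow> x < n \<Longrightarrow> \<sigma> x < n"
  using permutes_in_image[of \<sigma> "{..<n}" x] by simp

lemma kap_Vs: assumes s: "\<sigma> permutes {..<n}" and idx: "t<n" "t'<n" "r<n" "s<n"
  shows "kap (Vs n \<sigma> S) t t' r s = chi S t * chi S t' * chi S r * chi S s * kap (V0 n) (\<sigma> t) (\<sigma> t') (\<sigma> r) (\<sigma> s)"
proof -
  have "kap (Vs n \<sigma> S) t t' r s = (\<Sum>d<4. \<Sum>c<4. (chi S t * chi S t' * chi S r * chi S s) *
      (cnj (V0 n $$ (\<sigma> t * 4 + c, \<sigma> r * 4 + d)) * V0 n $$ (\<sigma> t' * 4 + c, \<sigma> s * 4 + d))) / 4"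
    unfolding kap_def using idx by (intro arg_cong[where f="\<lambda>x. x/4"] sum.cong refl) (simp add: Vs_idx chi_cnj)
  also have "... = chi S t * chi S t' * chi S r * chi S s * kap (V0 n) (\<sigma> t) (\<sigma> t') (\<sigma> r) (\<sigma> s)"
    by (simp add: kap_def sum_distrib_left[symmetric])
  finally show ?thesis .
qed

lemma Vs_unitary: assumes n: "odd n" "5 \<le> n" and s: "\<sigma> permutes {..<n}" shows "unitary (n*4) (Vs n \<sigma> S)"
proof (rule left_unitary[OF Vs_carrier], rule eq_mat4)
  show "adj (Vs n \<sigma> S) * Vs n \<sigma> S \<in> carrier_mat (n*4) (n*4)"
    using Vs_carrier by (metis adj_carrier mult_carrier_mat)
  show "1\<^sub>m (n*4) \<in> carrier_mat (n*4) (n*4)" by simp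
  fix y z d e :: nat assume yz: "y<n" "z<n" "d<4" "e<4"
  have U0: "adj (V0 n) * V0 n = 1\<^sub>m (n*4)" using V0_unitary[OF n] by (simp add: unitary_def)
  have bij: "bij_betw \<sigma> {..<n} {..<n}" using s by (rule permutes_imp_bij)
  have "(adj (Vs n \<sigma> S) * Vs n \<sigma> S) $$ (y*4+d, z*4+e) = (\<Sum>t<n. \<Sum>c<4. cnj (Vs n \<sigma> S $$ (t*4+c, y*4+d)) * Vs n \<sigma> S $$ (t*4+c, z*4+e))"
    by (rule AV_entry4[OF Vs_carrier Vs_carrier]) (use yz in \<open>simp_all add: idx_bound\<close>)
  also have "... = chi S y * chi S z * (\<Sum>t<n. (\<lambda>t. \<Sum>c<4. cnj (V0 n $$ (t*4+c, \<sigma> y*4+d)) * V0 n $$ (t*4+c, \<sigma> z*4+e)) (\<sigma> t))"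
  proof -
    have "\<And>t c. t<n \<Longrightarrow> c<4 \<Longrightarrow> cnj (Vs n \<sigma> S $$ (t*4+c, y*4+d)) * Vs n \<sigma> S $$ (t*4+c, z*4+e)
       = chi S y * chi S z * (cnj (V0 n $$ (\<sigma> t*4+c, \<sigma> y*4+d)) * V0 n $$ (\<sigma> t*4+c, \<sigma> z*4+e))"
    proof -
      fix t c assume "t<n" "c<(4::nat)"
      then have "cnj (Vs n \<sigma> S $$ (t*4+c, y*4+d)) * Vs n \<sigma> S $$ (t*4+c, z*4+e)
        = (chi S t * chi S t) * chi S y * chi S z * (cnj (V0 n $$ (\<sigma> t*4+c, \<sigma> y*4+d)) * V0 n $$ (\<sigma> t*4+c, \<sigma> z*4+e))"
        using yz by (simp add: Vs_idx chi_cnj)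
      then show "cnj (Vs n \<sigma> S $$ (t*4+c, y*4+d)) * Vs n \<sigma> S $$ (t*4+c, z*4+e)
       = chi S y * chi S z * (cnj (V0 n $$ (\<sigma> t*4+c, \<sigma> y*4+d)) * V0 n $$ (\<sigma> t*4+c, \<sigma> z*4+e))"
        by (simp add: chi_sq)
    qed
    then show ?thesis by (simp add: sum_distrib_left)
  qed
  also have "... = chi S y * chi S z * (\<Sum>t<n. \<Sum>c<4. cnj (V0 n $$ (t*4+c, \<sigma> y*4+d)) * V0 n $$ (t*4+c, \<sigma> z*4+e))"
    using sum.reindex_bij_betw[OF bij, of "\<lambda>t. \<Sum>c<4. cnj (V0 n $$ (t*4+c, \<sigma> y*4+d)) * V0 n $$ (t*4+c, \<sigma> z*4+e)"] by simp
  also have "... = chi S y * chi S z * (adj (V0 n) * V0 n) $$ (\<sigma> y*4+d, \<sigma> z*4+e)"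
    using yz perm_lt[OF s] by (simp add: AV_entry4[OF V0_carrier V0_carrier] idx_bound)
  also have "... = 1\<^sub>m (n*4) $$ (y*4+d, z*4+e)"
  proof -
    have inj: "\<sigma> y = \<sigma> z \<longleftrightarrow> y = z" using permutes_inj[OF s] by (auto dest: injD)
    show ?thesis using yz perm_lt[OF s] U0 inj by (auto simp: idx_bound idx_inj chi_sq)
  qed
  finally show "(adj (Vs n \<sigma> S) * Vs n \<sigma> S) $$ (y*4+d, z*4+e) = 1\<^sub>m (n*4) $$ (y*4+d, z*4+e)" .
qed

definition flip :: "nat \<Rightarrow> nat set \<Rightarrow> nat set" where
  "flip i S = (if i \<in> S then S - {i} else insert i S)"

lemma chi_flip: "chi (flip i S) x = (if x = i then - chi S x else chi S x)"
  unfolding chi_def flip_def by (cases "x = i"; cases "i \<in> S"; simp)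

lemma flip_zero: assumes i: "i < n" and g: "\<And>S. g (flip i S) = - g S"
  shows "(\<Sum>S\<in>Pow {..<n}. g S) = (0::complex)"
proof -
  have bij: "bij_betw (flip i) (Pow {..<n}) (Pow {..<n})"
    by (rule bij_betw_byWitness[where f' = "flip i"]) (use i in \<open>auto simp: flip_def\<close>)
  have "(\<Sum>S\<in>Pow {..<n}. g (flip i S)) = (\<Sum>S\<in>Pow {..<n}. g S)"
    using sum.reindex_bij_betw[OF bij] .
  then have "(\<Sum>S\<in>Pow {..<n}. g S) = - (\<Sum>S\<in>Pow {..<n}. g S)" by (simp add: g sum_negf)
  then show ?thesis by simp
qed

definition pairing :: "nat \<Rightarrow> nat \<Rightarrow> nat \<Rightarrow> nat \<Rightarrow> bool" where
  "pairing t t' r s \<longleftrightarrow> (t = t' \<and> r = s) \<or> (t = r \<and> t' = s) \<or> (t = s \<and> t' = r)"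

lemma sign_sum: assumes "t<n" "t'<n" "r<n" "s<n"
  shows "(\<Sum>S\<in>Pow {..<n}. chi S t * chi S t' * chi S r * chi S s) = (if pairing t t' r s then of_nat (card (Pow {..<n::nat})) else 0)"
proof (cases "pairing t t' r s")
  case True
  have "chi S t * chi S t' * chi S r * chi S s = 1" for S
    using True unfolding pairing_def by (auto simp: chi_def)
  then show ?thesis using True by simp
next
  case False
  let ?g = "\<lambda>S. chi S t * chi S t' * chi S r * chi S s"
  have "\<exists>i. i < n \<and> (\<forall>S. ?g (flip i S) = - ?g S)"
  proof -
    have "(t \<noteq> t' \<and> t \<noteq> r \<and> t \<noteq> s) \<or> (t' \<noteq> t \<and> t' \<noteq> r \<and> t' \<noteq> s) \<or> (r \<noteq> t \<and> r \<noteq> t' \<and> r \<noteq> s) \<or> (s \<noteq> t \<and> s \<noteq> t' \<and> s \<noteq> r)"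
      using False unfolding pairing_def by auto
    then show ?thesis
    proof (elim disjE)
      assume "t \<noteq> t' \<and> t \<noteq> r \<and> t \<noteq> s" then show ?thesis using assms by (intro exI[of _ t]) (auto simp: chi_flip)
    next
      assume "t' \<noteq> t \<and> t' \<noteq> r \<and> t' \<noteq> s" then show ?thesis using assms by (intro exI[of _ t']) (auto simp: chi_flip)
    next
      assume "r \<noteq> t \<and> r \<noteq> t' \<and> r \<noteq> s" then show ?thesis using assms by (intro exI[of _ r]) (auto simp: chi_flip)
    next
      assume "s \<noteq> t \<and> s \<noteq> t' \<and> s \<noteq> r" then show ?thesis using assms by (intro exI[of _ s]) (auto simp: chi_flip)
    qed
  qed
  then obtain i where "i < n" "\<And>S. ?g (flip i S) = - ?g S" by blast
  then show ?thesis using flip_zero[of i n ?g] False by simp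
qed

definition PS :: "nat \<Rightarrow> (nat \<Rightarrow> nat) set" where "PS n = {\<sigma>. \<sigma> permutes {..<n}}"

lemma PS_finite: "finite (PS n)" unfolding PS_def by (rule finite_permutations) simp
lemma PS_ne: "id \<in> PS n" by (simp add: PS_def permutes_id)
lemma PS_card: "card (PS n) \<noteq> 0" using PS_finite PS_ne by auto

definition kt :: "nat \<Rightarrow> nat \<Rightarrow> nat \<Rightarrow> nat \<Rightarrow> nat \<Rightarrow> complex" where
  "kt n t t' r s = (\<Sum>\<sigma>\<in>PS n. kap (V0 n) (\<sigma> t) (\<sigma> t') (\<sigma> r) (\<sigma> s)) / of_nat (card (PS n))"

lemma kt_inv: assumes p: "\<pi> permutes {..<n}"
  shows "kt n (\<pi> a) (\<pi> b) (\<pi> c) (\<pi> d) = kt n a b c d"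
proof -
  have bij: "bij_betw (\<lambda>\<sigma>. \<sigma> \<circ> \<pi>) (PS n) (PS n)"
  proof (rule bij_betw_byWitness[where f' = "\<lambda>\<sigma>. \<sigma> \<circ> inv_into UNIV \<pi>"])
    show "\<forall>\<sigma>\<in>PS n. \<sigma> \<circ> \<pi> \<circ> inv_into UNIV \<pi> = \<sigma>" using permutes_inv_o(1)[OF p] by (simp add: comp_assoc)
    show "\<forall>\<sigma>\<in>PS n. \<sigma> \<circ> inv_into UNIV \<pi> \<circ> \<pi> = \<sigma>" using permutes_inv_o(2)[OF p] by (simp add: comp_assoc)
    show "(\<lambda>\<sigma>. \<sigma> \<circ> \<pi>) ` PS n \<subseteq> PS n" using p by (auto simp: PS_def intro: permutes_compose)
    show "(\<lambda>\<sigma>. \<sigma> \<circ> inv_into UNIV \<pi>) ` PS n \<subseteq> PS n" using p by (auto simp: PS_def intro: permutes_compose permutes_inv)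
  qed
  show ?thesis unfolding kt_def
    using sum.reindex_bij_betw[OF bij, of "\<lambda>\<sigma>. kap (V0 n) (\<sigma> a) (\<sigma> b) (\<sigma> c) (\<sigma> d)"] by simp
qed

lemma kt_a: assumes "5 \<le> n" "x < n" shows "kt n x x x x = 0"
  unfolding kt_def using assms by (simp add: PS_def kap0_a perm_lt)

lemma kt_b: assumes "5 \<le> n" "x < n" "y < n" "x \<noteq> y" shows "kt n x y x y = 0"
proof -
  have "\<sigma> x \<noteq> \<sigma> y" if "\<sigma> \<in> PS n" for \<sigma>
    using that assms permutes_inj[of \<sigma> "{..<n}"] by (auto simp: PS_def dest: injD)
  then show ?thesis unfolding kt_def using assms by (simp add: PS_def kap0_b perm_lt)
qed

lemma kt_c: assumes "odd n" "5 \<le> n" "x < n" "y < n" "x \<noteq> y" shows "kt n y x x y = - kt n y y x x"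
proof -
  have "\<sigma> x \<noteq> \<sigma> y" if "\<sigma> \<in> PS n" for \<sigma>
    using that assms permutes_inj[of \<sigma> "{..<n}"] by (auto simp: PS_def dest: injD)
  then have "kap (V0 n) (\<sigma> y) (\<sigma> x) (\<sigma> x) (\<sigma> y) = - kap (V0 n) (\<sigma> y) (\<sigma> y) (\<sigma> x) (\<sigma> x)" if "\<sigma> \<in> PS n" for \<sigma>
  proof -
    have p: "\<sigma> permutes {..<n}" using that by (simp add: PS_def)
    show ?thesis using kap0_c[OF assms(1,2) perm_lt[OF p assms(3)] perm_lt[OF p assms(4)]] \<open>\<And>\<sigma>. \<sigma> \<in> PS n \<Longrightarrow> \<sigma> x \<noteq> \<sigma> y\<close>[OF that] by simp
  qed
  then show ?thesis unfolding kt_def by (simp add: sum_negf)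
qed

lemma kt_sum: assumes n: "odd n" "5 \<le> n" and r: "r < n" shows "(\<Sum>t<n. kt n t t r r) = 1"
proof -
  have U0: "adj (V0 n) * V0 n = 1\<^sub>m (n*4)" using V0_unitary[OF n] by (simp add: unitary_def)
  have inner: "(\<Sum>t<n. kap (V0 n) (\<sigma> t) (\<sigma> t) (\<sigma> r) (\<sigma> r)) = 1" if "\<sigma> \<in> PS n" for \<sigma>
  proof -
    have bij: "bij_betw \<sigma> {..<n} {..<n}" using that by (simp add: PS_def permutes_imp_bij)
    have "(\<Sum>t<n. kap (V0 n) (\<sigma> t) (\<sigma> t) (\<sigma> r) (\<sigma> r)) = (\<Sum>t<n. kap (V0 n) t t (\<sigma> r) (\<sigma> r))"
      using sum.reindex_bij_betw[OF bij, of "\<lambda>t. kap (V0 n) t t (\<sigma> r) (\<sigma> r)"] by simp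
    also have "... = 1" using kap_sum_unitary[OF V0_carrier U0] perm_lt[of \<sigma> n r] that r by (simp add: PS_def)
    finally show ?thesis .
  qed
  have "(\<Sum>t<n. kt n t t r r) = (\<Sum>\<sigma>\<in>PS n. \<Sum>t<n. kap (V0 n) (\<sigma> t) (\<sigma> t) (\<sigma> r) (\<sigma> r)) / of_nat (card (PS n))"
    unfolding kt_def by (simp add: sum_divide_distrib[symmetric], rule disjI2, rule sum.swap)
  also have "... = 1" using inner PS_card by simp
  finally show ?thesis .
qed

lemma kt_d: assumes n: "odd n" "5 \<le> n" and tr: "t < n" "r < n" "t \<noteq> r"
  shows "kt n t t r r = 1 / (of_nat n - 1)"
proof -
  let ?c = "kt n t t r r"
  have eq: "kt n t2 t2 r r = (if t2 = r then 0 else ?c)" if "t2 < n" for t2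
  proof (cases "t2 = r")
    case True then show ?thesis using kt_a n tr by simp
  next
    case False
    let ?\<pi> = "Transposition.transpose t t2"
    have p: "?\<pi> permutes {..<n}" using tr that by (intro permutes_swap_id) auto
    have "kt n (?\<pi> t2) (?\<pi> t2) (?\<pi> r) (?\<pi> r) = kt n t2 t2 r r" by (rule kt_inv[OF p])
    moreover have "?\<pi> t2 = t" "?\<pi> r = r" using False tr by (auto simp: transpose_def)
    ultimately show ?thesis using False by simp
  qed
  have "(\<Sum>t2<n. kt n t2 t2 r r) = (\<Sum>t2<n. ?c - (if t2 = r then ?c else 0))"
    by (rule sum.cong) (auto simp: eq)
  also have "... = of_nat n * ?c - ?c" using tr by (simp add: sum_subtractf)
  finally have "(of_nat n - 1) * ?c = 1" using kt_sum[OF n tr(2)] by (simp add: algebra_simps)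
  moreover have "(of_nat n - 1 :: complex) \<noteq> 0"
  proof -
    have "(of_nat n - 1 :: complex) = of_nat (n-1)" using n by (simp add: of_nat_diff)
    moreover have "n - 1 \<noteq> 0" using n by simp
    ultimately show ?thesis by simp
  qed
  ultimately show ?thesis by (simp add: field_simps)
qed

definition kbar :: "nat \<Rightarrow> nat \<Rightarrow> nat \<Rightarrow> nat \<Rightarrow> nat \<Rightarrow> complex" where
  "kbar n t t' r s = (\<Sum>j\<in>PS n \<times> Pow {..<n}. kap (Vs n (fst j) (snd j)) t t' r s) / of_nat (card (PS n \<times> Pow {..<n}))"

lemma kbar_eq: assumes n: "odd n" "5 \<le> n" and idx: "t<n" "t'<n" "r<n" "s<n"
  shows "kbar n t t' r s = kapW n t t' r s"
proof -
  have fP: "finite (Pow {..<n::nat})" by simp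
  have cP: "card (Pow {..<n::nat}) \<noteq> 0" using fP by (auto simp: card_eq_0_iff)
  have "kbar n t t' r s = (\<Sum>\<sigma>\<in>PS n. \<Sum>S\<in>Pow {..<n}. chi S t * chi S t' * chi S r * chi S s * kap (V0 n) (\<sigma> t) (\<sigma> t') (\<sigma> r) (\<sigma> s))
        / (of_nat (card (PS n)) * of_nat (card (Pow {..<n::nat})))"
  proof -
    have "(\<Sum>j\<in>PS n \<times> Pow {..<n}. kap (Vs n (fst j) (snd j)) t t' r s) = (\<Sum>\<sigma>\<in>PS n. \<Sum>S\<in>Pow {..<n}. kap (Vs n \<sigma> S) t t' r s)"
      by (simp add: sum.cartesian_product case_prod_unfold)
    also have "... = (\<Sum>\<sigma>\<in>PS n. \<Sum>S\<in>Pow {..<n}. chi S t * chi S t' * chi S r * chi S s * kap (V0 n) (\<sigma> t) (\<sigma> t') (\<sigma> r) (\<sigma> s))"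
      using idx by (intro sum.cong refl) (simp add: kap_Vs PS_def)
    finally show ?thesis unfolding kbar_def by (simp add: card_cartesian_product)
  qed
  also have "... = kt n t t' r s * ((\<Sum>S\<in>Pow {..<n}. chi S t * chi S t' * chi S r * chi S s) / of_nat (card (Pow {..<n::nat})))"
    by (simp add: kt_def sum_distrib_left[symmetric] sum_distrib_right[symmetric] mult.commute)
  also have "... = (if pairing t t' r s then kt n t t' r s else 0)"
    using sign_sum[OF idx] cP by simp
  also have "... = kapW n t t' r s"
  proof (cases "pairing t t' r s")
    case False
    then have h: "\<not> (t = t' \<and> r = s \<and> t \<noteq> r)" "\<not> (t = s \<and> t' = r \<and> r \<noteq> s)" unfolding pairing_def by auto
    then show ?thesis using False by (simp only: kapW_def if_not_P[OF h(1)] if_not_P[OF h(2)] if_False)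
  next
    case True
    show ?thesis
    proof (cases "t = t' \<and> r = s \<and> t \<noteq> r")
      case True then show ?thesis using kt_d[OF n] idx by (auto simp: kapW_def pairing_def)
    next
      case F1: False
      show ?thesis
      proof (cases "t = s \<and> t' = r \<and> r \<noteq> s")
        case True
        then have "kt n t t' r s = - kt n s s r r" using kt_c[OF n, of r s] idx by auto
        then show ?thesis using True kt_d[OF n, of s r] idx by (auto simp: kapW_def pairing_def)
      next
        case F2: False
        have "kt n t t' r s = 0"
        proof -
          have "(t = r \<and> t' = s \<and> r \<noteq> s) \<or> (t = t' \<and> t' = r \<and> r = s)"
            using True F1 F2 unfolding pairing_def by auto
          then show ?thesis using kt_a[OF n(2)] kt_b[OF n(2)] idx by auto
        qed
        then show ?thesis using F1 F2 by (auto simp: kapW_def)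
      qed
    qed
  qed
  finally show ?thesis .
qed

lemma conv_avg:
  assumes J: "finite J" "J \<noteq> {}" and TT: "\<And>j. j \<in> J \<Longrightarrow> in_conv_Aut m (TT j)"
  shows "in_conv_Aut m (\<lambda>x. msum m J (\<lambda>j. complex_of_real (1 / real (card J))) (\<lambda>j. TT j x))"
proof -
  have ex: "\<forall>j\<in>J. \<exists>t :: nat set \<times> (nat \<Rightarrow> real) \<times> (nat \<Rightarrow> complex mat). finite (fst t) \<and> (\<forall>i\<in>fst t. fst (snd t) i \<ge> 0 \<and> unitary m (snd (snd t) i)) \<and> sum (fst (snd t)) (fst t) = 1
     \<and> (\<forall>x\<in>carrier_mat m m. TT j x = msum m (fst t) (\<lambda>i. complex_of_real (fst (snd t) i)) (\<lambda>i. adj (snd (snd t) i) * x * snd (snd t) i))"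
  proof
    fix j assume "j \<in> J"
    have "\<exists>N (c :: nat \<Rightarrow> real) u.
        (\<forall>l<N. c l \<ge> 0 \<and> unitary m (u l)) \<and> (\<Sum>l<N. c l) = 1 \<and>
        (\<forall>x \<in> carrier_mat m m. TT j x = msum m {..<N} (\<lambda>l. complex_of_real (c l)) (\<lambda>l. adj (u l) * x * u l))"
      using TT[OF \<open>j \<in> J\<close>] unfolding in_conv_Aut_msum .
    then obtain N and c :: "nat \<Rightarrow> real" and u where "\<forall>l<N. c l \<ge> 0 \<and> unitary m (u l)" "(\<Sum>l<N. c l) = 1"
        "\<forall>x \<in> carrier_mat m m. TT j x = msum m {..<N} (\<lambda>l. complex_of_real (c l)) (\<lambda>l. adj (u l) * x * u l)"
      by blast
    then show "\<exists>t :: nat set \<times> (nat \<Rightarrow> real) \<times> (nat \<Rightarrow> complex mat). finite (fst t) \<and> (\<forall>i\<in>fst t. fst (snd t) i \<ge> 0 \<and> unitary m (snd (snd t) i)) \<and> sum (fst (snd t)) (fst t) = 1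
     \<and> (\<forall>x\<in>carrier_mat m m. TT j x = msum m (fst t) (\<lambda>i. complex_of_real (fst (snd t) i)) (\<lambda>i. adj (snd (snd t) i) * x * snd (snd t) i))"
      by (intro exI[of _ "({..<N},c,u)"]) auto
  qed
  obtain f :: "_ \<Rightarrow> nat set \<times> (nat \<Rightarrow> real) \<times> (nat \<Rightarrow> complex mat)" where f: "\<forall>j\<in>J. finite (fst (f j)) \<and> (\<forall>i\<in>fst (f j). fst (snd (f j)) i \<ge> 0 \<and> unitary m (snd (snd (f j)) i)) \<and> sum (fst (snd (f j))) (fst (f j)) = 1
     \<and> (\<forall>x\<in>carrier_mat m m. TT j x = msum m (fst (f j)) (\<lambda>i. complex_of_real (fst (snd (f j)) i)) (\<lambda>i. adj (snd (snd (f j)) i) * x * snd (snd (f j)) i))"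
    using bchoice[OF ex] by (elim exE) (rule that)
  define I where "I j = fst (f j)" for j
  define c where "c j = fst (snd (f j))" for j
  define u where "u j = snd (snd (f j))" for j
  have fI: "\<And>j. j \<in> J \<Longrightarrow> finite (I j)" using f by (simp add: I_def)
  have cu: "\<And>j i. j \<in> J \<Longrightarrow> i \<in> I j \<Longrightarrow> c j i \<ge> 0 \<and> unitary m (u j i)" using f by (simp add: I_def c_def u_def)
  have sc: "\<And>j. j \<in> J \<Longrightarrow> sum (c j) (I j) = 1" using f by (simp add: I_def c_def)
  have Tj: "\<And>j x. j \<in> J \<Longrightarrow> x \<in> carrier_mat m m \<Longrightarrow> TT j x = msum m (I j) (\<lambda>i. complex_of_real (c j i)) (\<lambda>i. adj (u j i) * x * u j i)"
    using f by (simp add: I_def c_def u_def)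
  have cJ: "card J \<noteq> 0" using J by simp
  show ?thesis
  proof (rule conv_intro[of "Sigma J I" "\<lambda>(j,i). c j i / real (card J)" _ "\<lambda>(j,i). u j i"])
    show "finite (Sigma J I)" using J fI by simp
    fix ji assume "ji \<in> Sigma J I"
    then obtain j i where "ji = (j,i)" "j \<in> J" "i \<in> I j" by auto
    then show "(case ji of (j,i) \<Rightarrow> c j i / real (card J)) \<ge> 0 \<and> unitary m (case ji of (j,i) \<Rightarrow> u j i)"
      using cu by simp
  next
    have "(\<Sum>ji\<in>Sigma J I. case ji of (j,i) \<Rightarrow> c j i / real (card J)) = (\<Sum>j\<in>J. \<Sum>i\<in>I j. c j i / real (card J))"
      using J fI by (simp add: sum.Sigma)
    also have "... = (\<Sum>j\<in>J. 1 / real (card J))"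
      by (rule sum.cong[OF refl]) (simp add: sum_divide_distrib[symmetric] sc)
    also have "... = 1" using cJ by simp
    finally show "(\<Sum>ji\<in>Sigma J I. case ji of (j,i) \<Rightarrow> c j i / real (card J)) = 1" .
  next
    fix x :: "complex mat" assume x: "x \<in> carrier_mat m m"
    show "msum m J (\<lambda>j. complex_of_real (1 / real (card J))) (\<lambda>j. TT j x) =
      msum m (Sigma J I) (\<lambda>ji. complex_of_real (case ji of (j,i) \<Rightarrow> c j i / real (card J))) (\<lambda>ji. adj (case ji of (j,i) \<Rightarrow> u j i) * x * (case ji of (j,i) \<Rightarrow> u j i))"
    proof (rule eq_matI)
      fix p q assume "p < dim_row (msum m (Sigma J I) (\<lambda>ji. complex_of_real (case ji of (j,i) \<Rightarrow> c j i / real (card J))) (\<lambda>ji. adj (case ji of (j,i) \<Rightarrow> u j i) * x * (case ji of (j,i) \<Rightarrow> u j i)))"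
        "q < dim_col (msum m (Sigma J I) (\<lambda>ji. complex_of_real (case ji of (j,i) \<Rightarrow> c j i / real (card J))) (\<lambda>ji. adj (case ji of (j,i) \<Rightarrow> u j i) * x * (case ji of (j,i) \<Rightarrow> u j i)))"
      then have pq: "p < m" "q < m" by (auto simp: msum_def)
      have "msum m J (\<lambda>j. complex_of_real (1 / real (card J))) (\<lambda>j. TT j x) $$ (p,q) =
         (\<Sum>j\<in>J. complex_of_real (1 / real (card J)) * (\<Sum>i\<in>I j. complex_of_real (c j i) * (adj (u j i) * x * u j i) $$ (p,q)))"
        using pq by (simp add: msum_index Tj x)
      also have "... = (\<Sum>j\<in>J. \<Sum>i\<in>I j. complex_of_real (c j i / real (card J)) * (adj (u j i) * x * u j i) $$ (p,q))"
        by (simp add: sum_distrib_left)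
      also have "... = (\<Sum>ji\<in>Sigma J I. case ji of (j,i) \<Rightarrow> complex_of_real (c j i / real (card J)) * (adj (u j i) * x * u j i) $$ (p,q))"
        using J fI by (simp add: sum.Sigma)
      also have "... = msum m (Sigma J I) (\<lambda>ji. complex_of_real (case ji of (j,i) \<Rightarrow> c j i / real (card J))) (\<lambda>ji. adj (case ji of (j,i) \<Rightarrow> u j i) * x * (case ji of (j,i) \<Rightarrow> u j i)) $$ (p,q)"
        using pq by (simp add: msum_index case_prod_unfold)
      finally show "msum m J (\<lambda>j. complex_of_real (1 / real (card J))) (\<lambda>j. TT j x) $$ (p,q) =
        msum m (Sigma J I) (\<lambda>ji. complex_of_real (case ji of (j,i) \<Rightarrow> c j i / real (card J))) (\<lambda>ji. adj (case ji of (j,i) \<Rightarrow> u j i) * x * (case ji of (j,i) \<Rightarrow> u j i)) $$ (p,q)" .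
    qed (simp_all add: msum_def)
  qed
qed

lemma unit_tr: assumes "i < m" "j < m" shows "tr (unit_mat m i j) = (if i = j then 1 else 0)"
proof (cases "i = j")
  case True then show ?thesis using assms by (simp add: tr_def unit_mat_def)
next
  case False
  then have "\<And>ia. \<not> (ia = i \<and> ia = j)" by auto
  then have "(\<Sum>ia<m. if ia = i \<and> ia = j then 1 else 0) = (0::complex)" by (intro sum.neutral) auto
  then show ?thesis using assms False by (simp add: tr_def unit_mat_def)
qed

lemma hw_unit: assumes "i<n" "j<n" "x<n" "y<n"
  shows "holevo_werner n (unit_mat n i j) $$ (x,y) = kapW n i j x y"
proof -
  have c: "unit_mat n i j \<in> carrier_mat n n" by (simp add: unit_mat_def)
  have e: "unit_mat n i j $$ (y,x) = (if y = i \<and> x = j then 1 else 0)" using assms by (simp add: unit_mat_def)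
  have h: "holevo_werner n (unit_mat n i j) $$ (x,y) = (if x = y then (if i = j then 1 else 0) else 0)/(of_nat n - 1) - (if y = i \<and> x = j then 1 else 0)/(of_nat n - 1)"
    using hw_index[OF c assms(3,4)] unit_tr[OF assms(1,2)] e by simp
  show ?thesis unfolding h by (cases "x = y"; cases "i = j"; auto simp: kapW_def)
qed

lemma depol_unit: assumes "a'<4" "b'<4" "a<4" "b<4"
  shows "depol 4 (unit_mat 4 a' b') $$ (a,b) = (if a' = b' \<and> a = b then 1/4 else 0)"
  using assms by (simp add: depol_def ntr_def unit_tr)

lemma ptr_carrier: "id_tensor_ntr n k X \<in> carrier_mat n n" by (simp add: id_tensor_ntr_def)

lemma TM: assumes X: "X \<in> carrier_mat (n*4) (n*4)"
  shows "tensor_map n 4 (holevo_werner n) (depol 4) X = kron n 4 (Lin n (kapW n) (id_tensor_ntr n 4 X)) (1\<^sub>m 4)"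
proof (rule eq_mat4)
  show "tensor_map n 4 (holevo_werner n) (depol 4) X \<in> carrier_mat (n*4) (n*4)" by (simp add: tensor_map_def)
  show "kron n 4 (Lin n (kapW n) (id_tensor_ntr n 4 X)) (1\<^sub>m 4) \<in> carrier_mat (n*4) (n*4)" by simp
  fix x y a b :: nat assume xy: "x<n" "y<n" "a<4" "b<4"
  have "tensor_map n 4 (holevo_werner n) (depol 4) X $$ (x*4+a, y*4+b) =
     (\<Sum>i<n. \<Sum>j<n. \<Sum>a'<4. \<Sum>b'<4. X $$ (i*4+a', j*4+b') * kapW n i j x y * (if a' = b' \<and> a = b then 1/4 else 0))"
    using xy by (simp add: tensor_map_def idx_bound hw_unit depol_unit)
  also have "... = (\<Sum>i<n. \<Sum>j<n. (if a = b then (\<Sum>a'<4. X $$ (i*4+a', j*4+a')) / 4 else 0) * kapW n i j x y)"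
  proof (intro sum.cong refl)
    fix i j assume "i \<in> {..<n}" "j \<in> {..<n}"
    have "(\<Sum>a'<4. \<Sum>b'<4. X $$ (i*4+a', j*4+b') * kapW n i j x y * (if a' = b' \<and> a = b then 1/4 else 0))
       = (\<Sum>a'<4. if a = b then X $$ (i*4+a', j*4+a') * kapW n i j x y / 4 else 0)"
    proof (intro sum.cong refl)
      fix a' assume a': "a' \<in> {..<4::nat}"
      have "(\<Sum>b'<4. X $$ (i*4+a', j*4+b') * kapW n i j x y * (if a' = b' \<and> a = b then 1/4 else 0))
         = (\<Sum>b'<4::nat. if b' = a' then (if a = b then X $$ (i*4+a', j*4+a') * kapW n i j x y / 4 else 0) else 0)"
        by (intro sum.cong refl) auto
      then show "(\<Sum>b'<4. X $$ (i*4+a', j*4+b') * kapW n i j x y * (if a' = b' \<and> a = b then 1/4 else 0))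
         = (if a = b then X $$ (i*4+a', j*4+a') * kapW n i j x y / 4 else 0)" using a' by simp
    qed
    also have "... = (if a = b then (\<Sum>a'<4. X $$ (i*4+a', j*4+a')) / 4 else 0) * kapW n i j x y"
      by (simp add: sum_distrib_right sum_divide_distrib)
    finally show "(\<Sum>a'<4. \<Sum>b'<4. X $$ (i*4+a', j*4+b') * kapW n i j x y * (if a' = b' \<and> a = b then 1/4 else 0))
       = (if a = b then (\<Sum>a'<4. X $$ (i*4+a', j*4+a')) / 4 else 0) * kapW n i j x y" .
  qed
  also have "... = kron n 4 (Lin n (kapW n) (id_tensor_ntr n 4 X)) (1\<^sub>m 4) $$ (x*4+a, y*4+b)"
    using xy by (simp add: kron_index Lin_def id_tensor_ntr_def)
  finally show "tensor_map n 4 (holevo_werner n) (depol 4) X $$ (x*4+a, y*4+b) = kron n 4 (Lin n (kapW n) (id_tensor_ntr n 4 X)) (1\<^sub>m 4) $$ (x*4+a, y*4+b)" .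
qed

lemma Phi_eq: assumes X: "X \<in> carrier_mat (n*4) (n*4)"
  shows "Emap n (adj (Vs n \<sigma> S) * Emap n X * Vs n \<sigma> S) = kron n 4 (Lin n (kap (Vs n \<sigma> S)) (id_tensor_ntr n 4 X)) (1\<^sub>m 4)"
  unfolding Emap_def GEN[OF Vs_carrier ptr_carrier] ..

lemma part2: assumes n: "odd n" "5 \<le> n" shows "HW_factorizable_deg n 4"
proof -
  define J where "J = PS n \<times> Pow {..<n}"
  have fJ: "finite J" unfolding J_def using PS_finite by simp
  have neJ: "J \<noteq> {}" unfolding J_def using PS_ne by auto
  have cJ: "card J \<noteq> 0" using fJ neJ by simp
  define Phi where "Phi j X = Emap n (adj (Vs n (fst j) (snd j)) * Emap n X * Vs n (fst j) (snd j))" for j X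
  have cPhi: "in_conv_Aut (n*4) (Phi j)" if "j \<in> J" for j
  proof -
    have p: "fst j permutes {..<n}" using that by (auto simp: J_def PS_def)
    have U: "unitary (n*4) (Vs n (fst j) (snd j))" by (rule Vs_unitary[OF n p])
    have "in_conv_Aut (n*4) (\<lambda>X. adj (Vs n (fst j) (snd j)) * Emap n X * Vs n (fst j) (snd j))"
      by (rule conv_comp[OF Emap_conv conv_single[OF U]])
    from conv_comp[OF this Emap_conv] show ?thesis unfolding Phi_def .
  qed
  have cM: "in_conv_Aut (n*4) (\<lambda>X. msum (n*4) J (\<lambda>j. complex_of_real (1 / real (card J))) (\<lambda>j. Phi j X))"
    by (rule conv_avg[OF fJ neJ cPhi])
  show ?thesis unfolding HW_factorizable_deg_def
  proof (rule conv_ext[OF cM])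
    fix X :: "complex mat" assume X: "X \<in> carrier_mat (n*4) (n*4)"
    let ?Y = "id_tensor_ntr n 4 X"
    show "tensor_map n 4 (holevo_werner n) (depol 4) X = msum (n*4) J (\<lambda>j. complex_of_real (1 / real (card J))) (\<lambda>j. Phi j X)"
      unfolding TM[OF X]
    proof (rule eq_mat4)
      show "kron n 4 (Lin n (kapW n) ?Y) (1\<^sub>m 4) \<in> carrier_mat (n*4) (n*4)" by simp
      show "msum (n*4) J (\<lambda>j. complex_of_real (1 / real (card J))) (\<lambda>j. Phi j X) \<in> carrier_mat (n*4) (n*4)"
        by (simp add: msum_def)
      fix x y a b :: nat assume xy: "x<n" "y<n" "a<4" "b<4"
      have "msum (n*4) J (\<lambda>j. complex_of_real (1 / real (card J))) (\<lambda>j. Phi j X) $$ (x*4+a, y*4+b)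
        = (\<Sum>j\<in>J. 1 / of_nat (card J) * (Lin n (kap (Vs n (fst j) (snd j))) ?Y $$ (x,y) * 1\<^sub>m 4 $$ (a,b)))"
        using xy by (simp add: msum_index idx_bound Phi_def Phi_eq[OF X] kron_index)
      also have "... = (\<Sum>j\<in>J. \<Sum>t<n. \<Sum>t'<n. 1\<^sub>m 4 $$ (a,b) * ?Y $$ (t,t') * (kap (Vs n (fst j) (snd j)) t t' x y / of_nat (card J)))"
        using xy by (intro sum.cong refl) (simp add: Lin_def sum_distrib_left sum_distrib_right mult.commute mult.left_commute)
      also have "... = (\<Sum>t<n. \<Sum>t'<n. \<Sum>j\<in>J. 1\<^sub>m 4 $$ (a,b) * ?Y $$ (t,t') * (kap (Vs n (fst j) (snd j)) t t' x y / of_nat (card J)))"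
        by (rule rot3')
      also have "... = (\<Sum>t<n. \<Sum>t'<n. 1\<^sub>m 4 $$ (a,b) * ?Y $$ (t,t') * kbar n t t' x y)"
        unfolding kbar_def J_def[symmetric] by (simp add: sum_distrib_left sum_divide_distrib)
      also have "... = (\<Sum>t<n. \<Sum>t'<n. 1\<^sub>m 4 $$ (a,b) * ?Y $$ (t,t') * kapW n t t' x y)"
        using xy by (intro sum.cong refl) (simp add: kbar_eq[OF n])
      also have "... = kron n 4 (Lin n (kapW n) ?Y) (1\<^sub>m 4) $$ (x*4+a, y*4+b)"
        using xy by (simp add: kron_index Lin_def sum_distrib_left sum_distrib_right mult.commute mult.left_commute)
      finally show "kron n 4 (Lin n (kapW n) ?Y) (1\<^sub>m 4) $$ (x*4+a, y*4+b) = msum (n*4) J (\<lambda>j. complex_of_real (1 / real (card J))) (\<lambda>j. Phi j X) $$ (x*4+a, y*4+b)"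
        by simp
    qed
  qed
qed

theorem theorem5p2:
  shows "(\<exists>u. unitary (5*4) u \<and>
            (\<forall>x \<in> carrier_mat 5 5.
               holevo_werner 5 x = id_tensor_ntr 5 4 (adj u * kron 5 4 x (1\<^sub>m 4) * u)))
       \<and> (\<forall>n::nat. odd n \<and> n \<ge> 5 \<longrightarrow> HW_factorizable_deg n 4)"
  using part1 part2 by blast

end
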